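(* Let $e, e_1, e_2$ be terms of $\mathrm{F}_H$ and $x$ a variable, and suppose $e_1 \longrightarrow e_2$. (1) If $e[e_1/x] \longrightarrow^* v_1$ for a value $v_1$, then $e[e_2/x] \longrightarrow^* v_2$ for some value $v_2$; moreover, if $v_1 = \mathsf{true}$ then $v_2 = \mathsf{true}$. (2) If $e[e_2/x] \longrightarrow^* v_2$ for a value $v_2$, then $e[e_1/x] \longrightarrow^* v_1$ for some value $v_1$; moreover, if $v_2 = \mathsf{true}$ then $v_1 = \mathsf{true}$.
   Context: Syntax of the calculus $\mathrm{F}_H$. Fix a set of base types $B$ containing $\mathsf{Bool}$; each base type $B$ has a set $\mathcal{K}_B$ of constants (with $\mathcal{K}_{\mathsf{Bool}}=\{\mathsf{true},\mathsf{false}\}$); $k$ ranges over constants. Fix primitive operations $\mathtt{op}$, each with a denotation $[\![\mathtt{op}]\!]$, a partial function from tuples of constants to constants. Types: $T ::= B \mid \alpha \mid x{:}T_1\to T_2 \mid \forall\alpha.T \mid \{x{:}T \mid e\}$. Values: $v ::= k \mid \lambda x{:}T.e \mid \Lambda\alpha.e \mid \langle T_1\Rightarrow T_2\rangle^{\ell}$ ($\ell$ ranges over blame labels). Terms: $e ::= v \mid x \mid \mathtt{op}(e_1,\dots,e_n) \mid e_1\,e_2 \mid e\,T \mid \langle\!\langle \{x{:}T_1\mid e_1\}, e_2\rangle\!\rangle^{\ell} \mid \langle \{x{:}T_1\mid e_1\}, e_2, v\rangle^{\ell} \mid \Uparrow\ell$. Variables are not values. Substitution $e[e'/x]$ is capture-avoiding;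 $\mathsf{let}\ y{:}T = e_1\ \mathsf{in}\ e_2$ abbreviates $(\lambda y{:}T.e_2)\,e_1$. Reduction $\rightsquigarrow$: $\mathtt{op}(k_1,\dots,k_n)\rightsquigarrow[\![\mathtt{op}]\!](k_1,\dots,k_n)$; $(\lambda x{:}T.e)\,v\rightsquigarrow e[v/x]$; $(\Lambda\alpha.e)\,T\rightsquigarrow e[T/\alpha]$; $\langle B\Rightarrow B\rangle^\ell v\rightsquigarrow v$; $\langle x{:}T_{11}\to T_{12}\Rightarrow x{:}T_{21}\to T_{22}\rangle^\ell v\rightsquigarrow \lambda x{:}T_{21}.\,\mathsf{let}\ y{:}T_{11}=\langle T_{21}\Rightarrow T_{11}\rangle^\ell x\ \mathsf{in}\ \langle T_{12}[y/x]\Rightarrow T_{22}\rangle^\ell (v\,y)$ with $y$ fresh; $\langle\forall\alpha.T_1\Rightarrow\forall\alpha.T_2\rangle^\ell v\rightsquigarrow\Lambda\alpha.\langle T_1\Rightarrow T_2\rangle^\ell(v\,\alpha)$; $\langle\{x{:}T_1\mid e_1\}\Rightarrow T_2\rangle^\ell v\rightsquigarrow\langle T_1\Rightarrow T_2\rangle^\ell v$; $\langle T_1\Rightarrow\{x{:}T_2\mid e_2\}\rangle^\ell v\rightsquigarrow\langle\!\langle\{x{:}T_2\mid e_2\},\langle T_1\Rightarrow T_2\rangle^\ell v\rangle\!\rangle^\ell$ provided $T_1$ is not a refinement type; $\langle\!\langle\{x{:}T\mid e\},v\rangle\!\rangle^\ell\rightsquigarrow\langle\{x{:}T\mid e\},e[v/x],v\rangle^\ell$;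 $\langle\{x{:}T\mid e\},\mathsf{true},v\rangle^\ell\rightsquigarrow v$; $\langle\{x{:}T\mid e\},\mathsf{false},v\rangle^\ell\rightsquigarrow\Uparrow\ell$. Evaluation contexts: $E ::= [\,] \mid \mathtt{op}(v_1,\dots,v_n,E,e_1,\dots,e_m) \mid E\,e \mid v\,E \mid E\,T \mid \langle\!\langle\{x{:}T\mid e\},E\rangle\!\rangle^\ell \mid \langle\{x{:}T\mid e\},E,v\rangle^\ell$. Evaluation $\longrightarrow$: $E[e_1]\longrightarrow E[e_2]$ whenever $e_1\rightsquigarrow e_2$; $E[\Uparrow\ell]\longrightarrow\Uparrow\ell$ whenever $E\neq[\,]$. $\longrightarrow^*$ is the reflexive–transitive closure of $\longrightarrow$. *)

theory Defs
  imports Main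
begin

text \<open>Syntax of F_H in locally nameless representation.
  Bound term variables and bound type variables are de Bruijn indices
  (two separate index spaces); free term and type variables are names (nat).\<close>

datatype 'b base = BBool | BOther 'b
datatype 'k const = CBool bool | CK 'k

datatype ('b,'k,'p,'l) ty =
    TBase "'b base"
  | TBVar nat
  | TFVar nat
  | TFun "('b,'k,'p,'l) ty" "('b,'k,'p,'l) ty"     \<comment> \<open>x:T1 -> T2, T2 binds term index 0\<close>
  | TAll "('b,'k,'p,'l) ty"
  | TRef "('b,'k,'p,'l) ty" "('b,'k,'p,'l) tm"       \<comment> \<open>{x:T | e}, e binds term index 0\<close>
and ('b,'k,'p,'l) tm =
    Const "'k const"
  | BVar nat
  | FVar nat
  | Lam "('b,'k,'p,'l) ty" "('b,'k,'p,'l) tm"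
  | TLam "('b,'k,'p,'l) tm"
  | Cast 'l "('b,'k,'p,'l) ty" "('b,'k,'p,'l) ty"
  | Op 'p "('b,'k,'p,'l) tm list"
  | App "('b,'k,'p,'l) tm" "('b,'k,'p,'l) tm"
  | TApp "('b,'k,'p,'l) tm" "('b,'k,'p,'l) ty"
  | Check 'l "('b,'k,'p,'l) ty" "('b,'k,'p,'l) tm" "('b,'k,'p,'l) tm"
      \<comment> \<open>Check l T e1 e2 = \<langle>\<langle>{x:T|e1}, e2\<rangle>\<rangle>^l ; e1 binds term index 0\<close>
  | Active 'l "('b,'k,'p,'l) ty" "('b,'k,'p,'l) tm" "('b,'k,'p,'l) tm" "('b,'k,'p,'l) tm"
      \<comment> \<open>Active l T e1 e2 v = \<langle>{x:T|e1}, e2, v\<rangle>^l ; e1 binds term index 0\<close>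
  | Blame 'l

fun is_val :: "('b,'k,'p,'l) tm \<Rightarrow> bool" where
  "is_val (Const k) = True"
| "is_val (Lam T e) = True"
| "is_val (TLam e) = True"
| "is_val (Cast l T1 T2) = True"
| "is_val _ = False"

fun is_ref :: "('b,'k,'p,'l) ty \<Rightarrow> bool" where
  "is_ref (TRef T e) = True"
| "is_ref _ = False"

primrec open_ty :: "nat \<Rightarrow> ('b,'k,'p,'l) tm \<Rightarrow> ('b,'k,'p,'l) ty \<Rightarrow> ('b,'k,'p,'l) ty"
and open_tm :: "nat \<Rightarrow> ('b,'k,'p,'l) tm \<Rightarrow> ('b,'k,'p,'l) tm \<Rightarrow> ('b,'k,'p,'l) tm" where
  "open_ty k u (TBase b) = TBase b"
| "open_ty k u (TBVar n) = TBVar n"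
| "open_ty k u (TFVar a) = TFVar a"
| "open_ty k u (TFun T1 T2) = TFun (open_ty k u T1) (open_ty (Suc k) u T2)"
| "open_ty k u (TAll T) = TAll (open_ty k u T)"
| "open_ty k u (TRef T e) = TRef (open_ty k u T) (open_tm (Suc k) u e)"
| "open_tm k u (Const c) = Const c"
| "open_tm k u (BVar n) = (if n = k then u else BVar n)"
| "open_tm k u (FVar y) = FVar y"
| "open_tm k u (Lam T e) = Lam (open_ty k u T) (open_tm (Suc k) u e)"
| "open_tm k u (TLam e) = TLam (open_tm k u e)"
| "open_tm k u (Cast l T1 T2) = Cast l (open_ty k u T1) (open_ty k u T2)"
| "open_tm k u (Op p es) = Op p (map (open_tm k u) es)"
| "open_tm k u (App e1 e2) = App (open_tm k u e1) (open_tm k u e2)"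
| "open_tm k u (TApp e T) = TApp (open_tm k u e) (open_ty k u T)"
| "open_tm k u (Check l T e1 e2) = Check l (open_ty k u T) (open_tm (Suc k) u e1) (open_tm k u e2)"
| "open_tm k u (Active l T e1 e2 v) =
     Active l (open_ty k u T) (open_tm (Suc k) u e1) (open_tm k u e2) (open_tm k u v)"
| "open_tm k u (Blame l) = Blame l"

primrec openT_ty :: "nat \<Rightarrow> ('b,'k,'p,'l) ty \<Rightarrow> ('b,'k,'p,'l) ty \<Rightarrow> ('b,'k,'p,'l) ty"
and openT_tm :: "nat \<Rightarrow> ('b,'k,'p,'l) ty \<Rightarrow> ('b,'k,'p,'l) tm \<Rightarrow> ('b,'k,'p,'l) tm" where
  "openT_ty k U (TBase b) = TBase b"
| "openT_ty k U (TBVar n) = (if n = k then U else TBVar n)"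
| "openT_ty k U (TFVar a) = TFVar a"
| "openT_ty k U (TFun T1 T2) = TFun (openT_ty k U T1) (openT_ty k U T2)"
| "openT_ty k U (TAll T) = TAll (openT_ty (Suc k) U T)"
| "openT_ty k U (TRef T e) = TRef (openT_ty k U T) (openT_tm k U e)"
| "openT_tm k U (Const c) = Const c"
| "openT_tm k U (BVar n) = BVar n"
| "openT_tm k U (FVar y) = FVar y"
| "openT_tm k U (Lam T e) = Lam (openT_ty k U T) (openT_tm k U e)"
| "openT_tm k U (TLam e) = TLam (openT_tm (Suc k) U e)"
| "openT_tm k U (Cast l T1 T2) = Cast l (openT_ty k U T1) (openT_ty k U T2)"
| "openT_tm k U (Op p es) = Op p (map (openT_tm k U) es)"
| "openT_tm k U (App e1 e2) = App (openT_tm k U e1) (openT_tm k U e2)"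
| "openT_tm k U (TApp e T) = TApp (openT_tm k U e) (openT_ty k U T)"
| "openT_tm k U (Check l T e1 e2) = Check l (openT_ty k U T) (openT_tm k U e1) (openT_tm k U e2)"
| "openT_tm k U (Active l T e1 e2 v) =
     Active l (openT_ty k U T) (openT_tm k U e1) (openT_tm k U e2) (openT_tm k U v)"
| "openT_tm k U (Blame l) = Blame l"

primrec close_ty :: "nat \<Rightarrow> nat \<Rightarrow> ('b,'k,'p,'l) ty \<Rightarrow> ('b,'k,'p,'l) ty"
and close_tm :: "nat \<Rightarrow> nat \<Rightarrow> ('b,'k,'p,'l) tm \<Rightarrow> ('b,'k,'p,'l) tm" where
  "close_ty k x (TBase b) = TBase b"
| "close_ty k x (TBVar n) = TBVar n"
| "close_ty k x (TFVar a) = TFVar a"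
| "close_ty k x (TFun T1 T2) = TFun (close_ty k x T1) (close_ty (Suc k) x T2)"
| "close_ty k x (TAll T) = TAll (close_ty k x T)"
| "close_ty k x (TRef T e) = TRef (close_ty k x T) (close_tm (Suc k) x e)"
| "close_tm k x (Const c) = Const c"
| "close_tm k x (BVar n) = BVar n"
| "close_tm k x (FVar y) = (if y = x then BVar k else FVar y)"
| "close_tm k x (Lam T e) = Lam (close_ty k x T) (close_tm (Suc k) x e)"
| "close_tm k x (TLam e) = TLam (close_tm k x e)"
| "close_tm k x (Cast l T1 T2) = Cast l (close_ty k x T1) (close_ty k x T2)"
| "close_tm k x (Op p es) = Op p (map (close_tm k x) es)"
| "close_tm k x (App e1 e2) = App (close_tm k x e1) (close_tm k x e2)"
| "close_tm k x (TApp e T) = TApp (close_tm k x e) (close_ty k x T)"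
| "close_tm k x (Check l T e1 e2) = Check l (close_ty k x T) (close_tm (Suc k) x e1) (close_tm k x e2)"
| "close_tm k x (Active l T e1 e2 v) =
     Active l (close_ty k x T) (close_tm (Suc k) x e1) (close_tm k x e2) (close_tm k x v)"
| "close_tm k x (Blame l) = Blame l"

text \<open>Substitution of a term for a free term variable: e[u/x].
  Capture-avoiding by construction (bound variables are indices).\<close>
primrec subst_ty :: "nat \<Rightarrow> ('b,'k,'p,'l) tm \<Rightarrow> ('b,'k,'p,'l) ty \<Rightarrow> ('b,'k,'p,'l) ty"
and subst_tm :: "nat \<Rightarrow> ('b,'k,'p,'l) tm \<Rightarrow> ('b,'k,'p,'l) tm \<Rightarrow> ('b,'k,'p,'l) tm" where
  "subst_ty x u (TBase b) = TBase b"
| "subst_ty x u (TBVar n) = TBVar n"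
| "subst_ty x u (TFVar a) = TFVar a"
| "subst_ty x u (TFun T1 T2) = TFun (subst_ty x u T1) (subst_ty x u T2)"
| "subst_ty x u (TAll T) = TAll (subst_ty x u T)"
| "subst_ty x u (TRef T e) = TRef (subst_ty x u T) (subst_tm x u e)"
| "subst_tm x u (Const c) = Const c"
| "subst_tm x u (BVar n) = BVar n"
| "subst_tm x u (FVar y) = (if y = x then u else FVar y)"
| "subst_tm x u (Lam T e) = Lam (subst_ty x u T) (subst_tm x u e)"
| "subst_tm x u (TLam e) = TLam (subst_tm x u e)"
| "subst_tm x u (Cast l T1 T2) = Cast l (subst_ty x u T1) (subst_ty x u T2)"
| "subst_tm x u (Op p es) = Op p (map (subst_tm x u) es)"
| "subst_tm x u (App e1 e2) = App (subst_tm x u e1) (subst_tm x u e2)"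
| "subst_tm x u (TApp e T) = TApp (subst_tm x u e) (subst_ty x u T)"
| "subst_tm x u (Check l T e1 e2) = Check l (subst_ty x u T) (subst_tm x u e1) (subst_tm x u e2)"
| "subst_tm x u (Active l T e1 e2 v) =
     Active l (subst_ty x u T) (subst_tm x u e1) (subst_tm x u e2) (subst_tm x u v)"
| "subst_tm x u (Blame l) = Blame l"

primrec fv_ty :: "('b,'k,'p,'l) ty \<Rightarrow> nat set"
and fv_tm :: "('b,'k,'p,'l) tm \<Rightarrow> nat set" where
  "fv_ty (TBase b) = {}"
| "fv_ty (TBVar n) = {}"
| "fv_ty (TFVar a) = {}"
| "fv_ty (TFun T1 T2) = fv_ty T1 \<union> fv_ty T2"
| "fv_ty (TAll T) = fv_ty T"
| "fv_ty (TRef T e) = fv_ty T \<union> fv_tm e"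
| "fv_tm (Const c) = {}"
| "fv_tm (BVar n) = {}"
| "fv_tm (FVar y) = {y}"
| "fv_tm (Lam T e) = fv_ty T \<union> fv_tm e"
| "fv_tm (TLam e) = fv_tm e"
| "fv_tm (Cast l T1 T2) = fv_ty T1 \<union> fv_ty T2"
| "fv_tm (Op p es) = \<Union> (set (map fv_tm es))"
| "fv_tm (App e1 e2) = fv_tm e1 \<union> fv_tm e2"
| "fv_tm (TApp e T) = fv_tm e \<union> fv_ty T"
| "fv_tm (Check l T e1 e2) = fv_ty T \<union> fv_tm e1 \<union> fv_tm e2"
| "fv_tm (Active l T e1 e2 v) = fv_ty T \<union> fv_tm e1 \<union> fv_tm e2 \<union> fv_tm v"
| "fv_tm (Blame l) = {}"

primrec lc_ty :: "nat \<Rightarrow> nat \<Rightarrow> ('b,'k,'p,'l) ty \<Rightarrow> bool"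
and lc_tm :: "nat \<Rightarrow> nat \<Rightarrow> ('b,'k,'p,'l) tm \<Rightarrow> bool" where
  "lc_ty k j (TBase b) = True"
| "lc_ty k j (TBVar n) = (n < j)"
| "lc_ty k j (TFVar a) = True"
| "lc_ty k j (TFun T1 T2) = (lc_ty k j T1 \<and> lc_ty (Suc k) j T2)"
| "lc_ty k j (TAll T) = lc_ty k (Suc j) T"
| "lc_ty k j (TRef T e) = (lc_ty k j T \<and> lc_tm (Suc k) j e)"
| "lc_tm k j (Const c) = True"
| "lc_tm k j (BVar n) = (n < k)"
| "lc_tm k j (FVar y) = True"
| "lc_tm k j (Lam T e) = (lc_ty k j T \<and> lc_tm (Suc k) j e)"
| "lc_tm k j (TLam e) = lc_tm k (Suc j) e"
| "lc_tm k j (Cast l T1 T2) = (lc_ty k j T1 \<and> lc_ty k j T2)"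
| "lc_tm k j (Op p es) = list_all id (map (lc_tm k j) es)"
| "lc_tm k j (App e1 e2) = (lc_tm k j e1 \<and> lc_tm k j e2)"
| "lc_tm k j (TApp e T) = (lc_tm k j e \<and> lc_ty k j T)"
| "lc_tm k j (Check l T e1 e2) = (lc_ty k j T \<and> lc_tm (Suc k) j e1 \<and> lc_tm k j e2)"
| "lc_tm k j (Active l T e1 e2 v) =
     (lc_ty k j T \<and> lc_tm (Suc k) j e1 \<and> lc_tm k j e2 \<and> lc_tm k j v)"
| "lc_tm k j (Blame l) = True"

text \<open>Grammar restriction: the third component of an active check must be a value.\<close>
primrec gr_ty :: "('b,'k,'p,'l) ty \<Rightarrow> bool"
and gr_tm :: "('b,'k,'p,'l) tm \<Rightarrow> bool" where
  "gr_ty (TBase b) = True"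
| "gr_ty (TBVar n) = True"
| "gr_ty (TFVar a) = True"
| "gr_ty (TFun T1 T2) = (gr_ty T1 \<and> gr_ty T2)"
| "gr_ty (TAll T) = gr_ty T"
| "gr_ty (TRef T e) = (gr_ty T \<and> gr_tm e)"
| "gr_tm (Const c) = True"
| "gr_tm (BVar n) = True"
| "gr_tm (FVar y) = True"
| "gr_tm (Lam T e) = (gr_ty T \<and> gr_tm e)"
| "gr_tm (TLam e) = gr_tm e"
| "gr_tm (Cast l T1 T2) = (gr_ty T1 \<and> gr_ty T2)"
| "gr_tm (Op p es) = list_all id (map gr_tm es)"
| "gr_tm (App e1 e2) = (gr_tm e1 \<and> gr_tm e2)"
| "gr_tm (TApp e T) = (gr_tm e \<and> gr_ty T)"
| "gr_tm (Check l T e1 e2) = (gr_ty T \<and> gr_tm e1 \<and> gr_tm e2)"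
| "gr_tm (Active l T e1 e2 v) = (gr_ty T \<and> gr_tm e1 \<and> gr_tm e2 \<and> gr_tm v \<and> is_val v)"
| "gr_tm (Blame l) = True"

definition is_term :: "('b,'k,'p,'l) tm \<Rightarrow> bool" where
  "is_term e \<longleftrightarrow> lc_tm 0 0 e \<and> gr_tm e"

text \<open>Reduction (the primitive reduction relation, parametric in the denotation
  \<open>\<delta>\<close> of the primitive operations: a partial function on tuples of constants).\<close>
inductive red :: "('p \<Rightarrow> 'k const list \<Rightarrow> 'k const option)
    \<Rightarrow> ('b,'k,'p,'l) tm \<Rightarrow> ('b,'k,'p,'l) tm \<Rightarrow> bool" for \<delta> where
  r_op: "\<delta> p ks = Some k \<Longrightarrow> red \<delta> (Op p (map Const ks)) (Const k)"
| r_beta: "is_val v \<Longrightarrow> red \<delta> (App (Lam T e) v) (open_tm 0 v e)"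
| r_tbeta: "red \<delta> (TApp (TLam e) T) (openT_tm 0 T e)"
| r_cbase: "is_val v \<Longrightarrow> red \<delta> (App (Cast l (TBase B) (TBase B)) v) v"
| r_cfun: "is_val v \<Longrightarrow> a \<noteq> b \<Longrightarrow>
     a \<notin> fv_ty T11 \<union> fv_ty T12 \<union> fv_ty T21 \<union> fv_ty T22 \<union> fv_tm v \<Longrightarrow>
     b \<notin> fv_ty T11 \<union> fv_ty T12 \<union> fv_ty T21 \<union> fv_ty T22 \<union> fv_tm v \<Longrightarrow>
     red \<delta> (App (Cast l (TFun T11 T12) (TFun T21 T22)) v)
       (Lam T21 (close_tm 0 a
          (App (Lam T11 (close_tm 0 b
                   (App (Cast l (open_ty 0 (FVar b) T12) (open_ty 0 (FVar a) T22))
                        (App v (FVar b)))))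
               (App (Cast l T21 T11) (FVar a)))))"
| r_call: "is_val v \<Longrightarrow>
     red \<delta> (App (Cast l (TAll T1) (TAll T2)) v) (TLam (App (Cast l T1 T2) (TApp v (TBVar 0))))"
| r_cforget: "is_val v \<Longrightarrow> red \<delta> (App (Cast l (TRef T1 e1) T2) v) (App (Cast l T1 T2) v)"
| r_cprecheck: "is_val v \<Longrightarrow> \<not> is_ref T1 \<Longrightarrow>
     red \<delta> (App (Cast l T1 (TRef T2 e2)) v) (Check l T2 e2 (App (Cast l T1 T2) v))"
| r_check: "is_val v \<Longrightarrow> red \<delta> (Check l T e v) (Active l T e (open_tm 0 v e) v)"
| r_ok: "is_val v \<Longrightarrow> red \<delta> (Active l T e (Const (CBool True)) v) v"
| r_fail: "is_val v \<Longrightarrow> red \<delta> (Active l T e (Const (CBool False)) v) (Blame l)"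

datatype ('b,'k,'p,'l) ctx =
    Hole
  | COp 'p "('b,'k,'p,'l) tm list" "('b,'k,'p,'l) ctx" "('b,'k,'p,'l) tm list"
  | CAppL "('b,'k,'p,'l) ctx" "('b,'k,'p,'l) tm"
  | CAppR "('b,'k,'p,'l) tm" "('b,'k,'p,'l) ctx"
  | CTApp "('b,'k,'p,'l) ctx" "('b,'k,'p,'l) ty"
  | CCheck 'l "('b,'k,'p,'l) ty" "('b,'k,'p,'l) tm" "('b,'k,'p,'l) ctx"
  | CActive 'l "('b,'k,'p,'l) ty" "('b,'k,'p,'l) tm" "('b,'k,'p,'l) ctx" "('b,'k,'p,'l) tm"

primrec ctx_ok :: "('b,'k,'p,'l) ctx \<Rightarrow> bool" where
  "ctx_ok Hole = True"
| "ctx_ok (COp p vs E es) = ((\<forall>v\<in>set vs. is_val v) \<and> ctx_ok E)"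
| "ctx_ok (CAppL E e) = ctx_ok E"
| "ctx_ok (CAppR v E) = (is_val v \<and> ctx_ok E)"
| "ctx_ok (CTApp E T) = ctx_ok E"
| "ctx_ok (CCheck l T e E) = ctx_ok E"
| "ctx_ok (CActive l T e E v) = (is_val v \<and> ctx_ok E)"

primrec fill :: "('b,'k,'p,'l) ctx \<Rightarrow> ('b,'k,'p,'l) tm \<Rightarrow> ('b,'k,'p,'l) tm" where
  "fill Hole t = t"
| "fill (COp p vs E es) t = Op p (vs @ [fill E t] @ es)"
| "fill (CAppL E e) t = App (fill E t) e"
| "fill (CAppR v E) t = App v (fill E t)"
| "fill (CTApp E T) t = TApp (fill E t) T"
| "fill (CCheck l T e E) t = Check l T e (fill E t)"
| "fill (CActive l T e E v) t = Active l T e (fill E t) v"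

inductive step :: "('p \<Rightarrow> 'k const list \<Rightarrow> 'k const option)
    \<Rightarrow> ('b,'k,'p,'l) tm \<Rightarrow> ('b,'k,'p,'l) tm \<Rightarrow> bool" for \<delta> where
  s_red: "red \<delta> e1 e2 \<Longrightarrow> ctx_ok E \<Longrightarrow> step \<delta> (fill E e1) (fill E e2)"
| s_blame: "ctx_ok E \<Longrightarrow> E \<noteq> Hole \<Longrightarrow> step \<delta> (fill E (Blame l)) (Blame l)"

abbreviation steps where "steps \<delta> \<equiv> (step \<delta>)\<^sup>*\<^sup>*"

end

theory Submission
  imports Defs
begin


inductive rs for \<delta> where
  rs_red: "red \<delta> r r' \<Longrightarrow> rs \<delta> r r'"
| rs_op: "\<forall>v\<in>set vs. is_val v \<Longrightarrow> rs \<delta> t t' \<Longrightarrow> rs \<delta> (Op p (vs @ t # es)) (Op p (vs @ t' # es))"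
| rs_appl: "rs \<delta> t t' \<Longrightarrow> rs \<delta> (App t u) (App t' u)"
| rs_appr: "is_val v \<Longrightarrow> rs \<delta> t t' \<Longrightarrow> rs \<delta> (App v t) (App v t')"
| rs_tapp: "rs \<delta> t t' \<Longrightarrow> rs \<delta> (TApp t T) (TApp t' T)"
| rs_check: "rs \<delta> t t' \<Longrightarrow> rs \<delta> (Check l T e t) (Check l T e t')"
| rs_active: "is_val v \<Longrightarrow> rs \<delta> t t' \<Longrightarrow> rs \<delta> (Active l T e t v) (Active l T e t' v)"

inductive bf where
  bf_blame: "bf (Blame l) l"
| bf_op: "\<forall>v\<in>set vs. is_val v \<Longrightarrow> bf t l \<Longrightarrow> bf (Op p (vs @ t # es)) l"
| bf_appl: "bf t l \<Longrightarrow> bf (App t u) l"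
| bf_appr: "is_val v \<Longrightarrow> bf t l \<Longrightarrow> bf (App v t) l"
| bf_tapp: "bf t l \<Longrightarrow> bf (TApp t T) l"
| bf_check: "bf t l \<Longrightarrow> bf (Check l' T e t) l"
| bf_active: "is_val v \<Longrightarrow> bf t l \<Longrightarrow> bf (Active l' T e t v) l"

lemma rs_fill: "rs \<delta> t t' \<Longrightarrow> ctx_ok E \<Longrightarrow> rs \<delta> (fill E t) (fill E t')"
  by (induct E) (auto intro: rs.intros)

lemma bf_fill: "bf t l \<Longrightarrow> ctx_ok E \<Longrightarrow> bf (fill E t) l"
  by (induct E) (auto intro: bf.intros)

lemma rs_ex_fill: "rs \<delta> t t' \<Longrightarrow> \<exists>E r r'. ctx_ok E \<and> red \<delta> r r' \<and> t = fill E r \<and> t' = fill E r'"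
proof (induct rule: rs.induct)
  case (rs_red r r') then show ?case by (intro exI[of _ Hole]) auto
next
  case (rs_op vs t t' p es)
  then obtain E r r' where "ctx_ok E" "red \<delta> r r'" "t = fill E r" "t' = fill E r'" by blast
  then show ?case using rs_op by (intro exI[of _ "COp p vs E es"]) auto
next
  case (rs_appl t t' u)
  then obtain E r r' where "ctx_ok E" "red \<delta> r r'" "t = fill E r" "t' = fill E r'" by blast
  then show ?case by (intro exI[of _ "CAppL E u"]) auto
next
  case (rs_appr v t t')
  then obtain E r r' where "ctx_ok E" "red \<delta> r r'" "t = fill E r" "t' = fill E r'" by blast
  then show ?case using rs_appr by (intro exI[of _ "CAppR v E"]) auto
next
  case (rs_tapp t t' T)
  then obtain E r r' where "ctx_ok E" "red \<delta> r r'" "t = fill E r" "t' = fill E r'" by blast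
  then show ?case by (intro exI[of _ "CTApp E T"]) auto
next
  case (rs_check t t' l T e)
  then obtain E r r' where "ctx_ok E" "red \<delta> r r'" "t = fill E r" "t' = fill E r'" by blast
  then show ?case by (intro exI[of _ "CCheck l T e E"]) auto
next
  case (rs_active v t t' l T e)
  then obtain E r r' where "ctx_ok E" "red \<delta> r r'" "t = fill E r" "t' = fill E r'" by blast
  then show ?case using rs_active by (intro exI[of _ "CActive l T e E v"]) auto
qed

lemma fill_Blame_eq: "ctx_ok E \<Longrightarrow> E \<noteq> Hole \<Longrightarrow> fill E (Blame l) \<noteq> Blame l"
  by (cases E) auto

lemma bf_ex_fill: "bf t l \<Longrightarrow> \<exists>E. ctx_ok E \<and> t = fill E (Blame l) \<and> (t \<noteq> Blame l \<longrightarrow> E \<noteq> Hole)"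
proof (induct rule: bf.induct)
  case (bf_blame l) then show ?case by (intro exI[of _ Hole]) auto
next
  case (bf_op vs t l p es)
  then obtain E where "ctx_ok E" "t = fill E (Blame l)" by blast
  then show ?case using bf_op by (intro exI[of _ "COp p vs E es"]) auto
next
  case (bf_appl t l u)
  then obtain E where "ctx_ok E" "t = fill E (Blame l)" by blast
  then show ?case by (intro exI[of _ "CAppL E u"]) auto
next
  case (bf_appr v t l)
  then obtain E where "ctx_ok E" "t = fill E (Blame l)" by blast
  then show ?case using bf_appr by (intro exI[of _ "CAppR v E"]) auto
next
  case (bf_tapp t l T)
  then obtain E where "ctx_ok E" "t = fill E (Blame l)" by blast
  then show ?case by (intro exI[of _ "CTApp E T"]) auto
next
  case (bf_check t l l' T e)
  then obtain E where "ctx_ok E" "t = fill E (Blame l)" by blast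
  then show ?case by (intro exI[of _ "CCheck l' T e E"]) auto
next
  case (bf_active v t l l' T e)
  then obtain E where "ctx_ok E" "t = fill E (Blame l)" by blast
  then show ?case using bf_active by (intro exI[of _ "CActive l' T e E v"]) auto
qed

lemma step_iff: "step \<delta> t t' \<longleftrightarrow> rs \<delta> t t' \<or> (\<exists>l. bf t l \<and> t \<noteq> Blame l \<and> t' = Blame l)"
proof
  assume "step \<delta> t t'"
  then show "rs \<delta> t t' \<or> (\<exists>l. bf t l \<and> t \<noteq> Blame l \<and> t' = Blame l)"
  proof cases
    case (s_red e1 e2 E) then show ?thesis by (auto intro: rs_fill rs_red)
  next
    case (s_blame E l)
    then show ?thesis using fill_Blame_eq[of E l] by (auto intro: bf_fill bf_blame)
  qed
next
  assume "rs \<delta> t t' \<or> (\<exists>l. bf t l \<and> t \<noteq> Blame l \<and> t' = Blame l)"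
  then show "step \<delta> t t'"
  proof
    assume "rs \<delta> t t'"
    then show ?thesis using rs_ex_fill by (metis step.s_red)
  next
    assume "\<exists>l. bf t l \<and> t \<noteq> Blame l \<and> t' = Blame l"
    then obtain l where "bf t l" "t \<noteq> Blame l" "t' = Blame l" by blast
    then show ?thesis using bf_ex_fill by (metis fill.simps(1) step.s_blame)
  qed
qed

lemma red_not_val: "red \<delta> r r' \<Longrightarrow> \<not> is_val r"
  by (induct rule: red.induct) auto

lemma rs_not_val: "rs \<delta> t t' \<Longrightarrow> \<not> is_val t"
  by (induct rule: rs.induct) (auto dest: red_not_val)

lemma bf_not_val: "bf t l \<Longrightarrow> \<not> is_val t"
  by (induct rule: bf.induct) auto

lemma open_lc:
  fixes T :: "('b,'k,'p,'l) ty" and t :: "('b,'k,'p,'l) tm"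
  shows "lc_ty k j T \<Longrightarrow> k \<le> n \<Longrightarrow> open_ty n u T = T"
  "lc_tm k j t \<Longrightarrow> k \<le> n \<Longrightarrow> open_tm n u t = t"
  by (induct T and t arbitrary: k j n and k j n)
     (auto simp: list_all_iff intro!: map_idI)

lemma openT_lc:
  fixes T :: "('b,'k,'p,'l) ty" and t :: "('b,'k,'p,'l) tm"
  shows "lc_ty k j T \<Longrightarrow> j \<le> n \<Longrightarrow> openT_ty n U T = T"
  "lc_tm k j t \<Longrightarrow> j \<le> n \<Longrightarrow> openT_tm n U t = t"
  by (induct T and t arbitrary: k j n and k j n)
     (auto simp: list_all_iff intro!: map_idI)

lemma close_fresh:
  fixes T :: "('b,'k,'p,'l) ty" and t :: "('b,'k,'p,'l) tm"
  shows "x \<notin> fv_ty T \<Longrightarrow> close_ty k x T = T"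
  "x \<notin> fv_tm t \<Longrightarrow> close_tm k x t = t"
  by (induct T and t arbitrary: k and k)
     (auto intro!: map_idI)

lemma close_open:
  fixes T :: "('b,'k,'p,'l) ty" and t :: "('b,'k,'p,'l) tm"
  shows "x \<notin> fv_ty T \<Longrightarrow> close_ty k x (open_ty k (FVar x) T) = T"
  "x \<notin> fv_tm t \<Longrightarrow> close_tm k x (open_tm k (FVar x) t) = t"
  by (induct T and t arbitrary: k and k)
     (auto intro!: map_idI)

lemma close_open_indep:
  fixes T :: "('b,'k,'p,'l) ty" and t :: "('b,'k,'p,'l) tm"
  shows "x \<notin> fv_ty T \<Longrightarrow> y \<notin> fv_ty T \<Longrightarrow> close_ty k x (open_ty j (FVar x) T) = close_ty k y (open_ty j (FVar y) T)"
  "x \<notin> fv_tm t \<Longrightarrow> y \<notin> fv_tm t \<Longrightarrow> close_tm k x (open_tm j (FVar x) t) = close_tm k y (open_tm j (FVar y) t)"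
  by (induct T and t arbitrary: k j and k j)
     auto

lemma fv_open:
  fixes T :: "('b,'k,'p,'l) ty" and t :: "('b,'k,'p,'l) tm"
  shows "fv_ty (open_ty k u T) \<subseteq> fv_ty T \<union> fv_tm u"
  "fv_tm (open_tm k u t) \<subseteq> fv_tm t \<union> fv_tm u"
  by (induct T and t arbitrary: k and k)
     (fastforce split: if_splits)+

lemma fv_finite:
  fixes T :: "('b,'k,'p,'l) ty" and t :: "('b,'k,'p,'l) tm"
  shows "finite (fv_ty T)" "finite (fv_tm t)"
  by (induct T and t) auto



lemma vals_split:
  "\<forall>v\<in>set vs. is_val v \<Longrightarrow> \<forall>v\<in>set vs'. is_val v \<Longrightarrow> \<not> is_val t \<Longrightarrow> \<not> is_val t' \<Longrightarrow>
   vs @ t # es = vs' @ t' # es' \<Longrightarrow> vs = vs' \<and> t = t' \<and> es = es'"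
proof (induct vs arbitrary: vs')
  case Nil then show ?case by (cases vs') auto
next
  case (Cons a vs) then show ?case by (cases vs') auto
qed

definition cf where
  "cf l T11 T12 T21 T22 v a b = Lam T21 (close_tm 0 a
          (App (Lam T11 (close_tm 0 b
                   (App (Cast l (open_ty 0 (FVar b) T12) (open_ty 0 (FVar a) T22))
                        (App v (FVar b)))))
               (App (Cast l T21 T11) (FVar a))))"

lemma cf_norm:
  assumes "a \<noteq> b" "a \<notin> fv_ty T11 \<union> fv_ty T12 \<union> fv_ty T21 \<union> fv_ty T22 \<union> fv_tm v"
    "b \<notin> fv_ty T11 \<union> fv_ty T12 \<union> fv_ty T21 \<union> fv_ty T22 \<union> fv_tm v"
  shows "cf l T11 T12 T21 T22 v a b = Lam T21 (App (Lam T11 (App (Cast l T12 (close_ty 1 a (open_ty 0 (FVar a) T22))) (App v (BVar 0)))) (App (Cast l T21 T11) (BVar 0)))"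
proof -
  have "b \<notin> fv_ty (open_ty 0 (FVar a) T22)" using fv_open(1)[of 0 "FVar a" T22] assms by auto
  then show ?thesis using assms unfolding cf_def
    by (simp add: close_fresh close_open)
qed

lemma cf_indep:
  assumes "a \<noteq> b" "a \<notin> fv_ty T11 \<union> fv_ty T12 \<union> fv_ty T21 \<union> fv_ty T22 \<union> fv_tm v"
    "b \<notin> fv_ty T11 \<union> fv_ty T12 \<union> fv_ty T21 \<union> fv_ty T22 \<union> fv_tm v"
    "c \<noteq> d" "c \<notin> fv_ty T11 \<union> fv_ty T12 \<union> fv_ty T21 \<union> fv_ty T22 \<union> fv_tm v"
    "d \<notin> fv_ty T11 \<union> fv_ty T12 \<union> fv_ty T21 \<union> fv_ty T22 \<union> fv_tm v"
  shows "cf l T11 T12 T21 T22 v a b = cf l T11 T12 T21 T22 v c d"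
  using assms by (simp add: cf_norm close_open_indep(1)[of a T22 c])

lemma inj_Const[simp]: "inj Const" by (auto simp: inj_def)

lemma red_cfun_iff: "red \<delta> (App (Cast l (TFun T11 T12) (TFun T21 T22)) v) r \<longleftrightarrow>
   is_val v \<and> (\<exists>a b. a \<noteq> b \<and> a \<notin> fv_ty T11 \<union> fv_ty T12 \<union> fv_ty T21 \<union> fv_ty T22 \<union> fv_tm v \<and>
     b \<notin> fv_ty T11 \<union> fv_ty T12 \<union> fv_ty T21 \<union> fv_ty T22 \<union> fv_tm v \<and> r = cf l T11 T12 T21 T22 v a b)"
proof
  assume "red \<delta> (App (Cast l (TFun T11 T12) (TFun T21 T22)) v) r"
  then show "is_val v \<and> (\<exists>a b. a \<noteq> b \<and> a \<notin> fv_ty T11 \<union> fv_ty T12 \<union> fv_ty T21 \<union> fv_ty T22 \<union> fv_tm v \<and>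
     b \<notin> fv_ty T11 \<union> fv_ty T12 \<union> fv_ty T21 \<union> fv_ty T22 \<union> fv_tm v \<and> r = cf l T11 T12 T21 T22 v a b)"
    by cases (auto simp only: cf_def[symmetric])
next
  assume "is_val v \<and> (\<exists>a b. a \<noteq> b \<and> a \<notin> fv_ty T11 \<union> fv_ty T12 \<union> fv_ty T21 \<union> fv_ty T22 \<union> fv_tm v \<and>
     b \<notin> fv_ty T11 \<union> fv_ty T12 \<union> fv_ty T21 \<union> fv_ty T22 \<union> fv_tm v \<and> r = cf l T11 T12 T21 T22 v a b)"
  then obtain a b where h: "is_val v" "a \<noteq> b" "a \<notin> fv_ty T11 \<union> fv_ty T12 \<union> fv_ty T21 \<union> fv_ty T22 \<union> fv_tm v"
     "b \<notin> fv_ty T11 \<union> fv_ty T12 \<union> fv_ty T21 \<union> fv_ty T22 \<union> fv_tm v" "r = cf l T11 T12 T21 T22 v a b" by blast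
  show "red \<delta> (App (Cast l (TFun T11 T12) (TFun T21 T22)) v) r"
    unfolding h(5) cf_def by (rule red.r_cfun[OF h(1-4)])
qed

lemma red_det: "red \<delta> r r1 \<Longrightarrow> red \<delta> r r2 \<Longrightarrow> r1 = r2"
proof (induct rule: red.induct)
  case (r_cfun v a b T11 T12 T21 T22 l)
  then obtain c d where cd: "c \<noteq> d" "c \<notin> fv_ty T11 \<union> fv_ty T12 \<union> fv_ty T21 \<union> fv_ty T22 \<union> fv_tm v"
     "d \<notin> fv_ty T11 \<union> fv_ty T12 \<union> fv_ty T21 \<union> fv_ty T22 \<union> fv_tm v" "r2 = cf l T11 T12 T21 T22 v c d"
    unfolding red_cfun_iff by blast
  have "cf l T11 T12 T21 T22 v a b = cf l T11 T12 T21 T22 v c d"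
    by (rule cf_indep) (use r_cfun cd in auto)
  then show ?case unfolding cf_def[symmetric] using cd by simp
qed (erule red.cases; auto)+


lemma red_App_vals: "red \<delta> (App a b) r \<Longrightarrow> is_val a \<and> is_val b"
  by (erule red.cases) auto
lemma red_TApp_vals: "red \<delta> (TApp a T) r \<Longrightarrow> is_val a"
  by (erule red.cases) auto
lemma red_Op_vals: "red \<delta> (Op p ts) r \<Longrightarrow> \<forall>t\<in>set ts. is_val t"
  by (erule red.cases) auto
lemma red_Op_vals2: "red \<delta> (Op p (vs @ t # es)) r \<Longrightarrow> is_val t"
  by (erule red.cases) (auto simp: append_eq_map_conv Cons_eq_map_conv)
lemma red_Check_vals: "red \<delta> (Check l T e a) r \<Longrightarrow> is_val a"
  by (erule red.cases) auto
lemma red_Active_vals: "red \<delta> (Active l T e a v) r \<Longrightarrow> is_val a"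
  by (erule red.cases) auto

lemma rs_det: "rs \<delta> t t1 \<Longrightarrow> rs \<delta> t t2 \<Longrightarrow> t1 = t2"
proof (induct arbitrary: t2 rule: rs.induct)
  case (rs_red r r')
  from rs_red(2) show ?case
  proof cases
    case (rs_red) then show ?thesis using \<open>red \<delta> r r'\<close> by (rule red_det[rotated])
  next
    case (rs_op vs t t' p es) then show ?thesis using rs_red(1) by (metis red_Op_vals2 rs_not_val)
  next
    case (rs_appl t t' u) then show ?thesis using rs_red(1) by (metis red_App_vals rs_not_val)
  next
    case (rs_appr v t t') then show ?thesis using rs_red(1) by (metis red_App_vals rs_not_val)
  next
    case (rs_tapp t t' T) then show ?thesis using rs_red(1) by (metis red_TApp_vals rs_not_val)
  next
    case (rs_check t t' l T e) then show ?thesis using rs_red(1) by (metis red_Check_vals rs_not_val)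
  next
    case (rs_active v t t' l T e) then show ?thesis using rs_red(1) by (metis red_Active_vals rs_not_val)
  qed
next
  case (rs_op vs t t' p es)
  note outer = this
  from rs_op(4) show ?case
  proof cases
    case rs_red then show ?thesis using outer(2) by (metis red_Op_vals2 rs_not_val)
  next
    case (rs_op vs' u u' es')
    have "\<not> is_val t" using outer(2) by (rule rs_not_val)
    moreover have "\<not> is_val u" using rs_op by (auto dest: rs_not_val)
    ultimately have "vs = vs' \<and> t = u \<and> es = es'" using vals_split[of vs vs' t u es es'] rs_op outer(1)
      by auto
    then show ?thesis using rs_op outer(3) by auto
  qed
next
  case (rs_appl t t' u)
  from rs_appl(3) show ?case
  proof cases
    case rs_red then show ?thesis using rs_appl(1) by (metis red_App_vals rs_not_val)
  next
    case (rs_appl t2') then show ?thesis using \<open>\<And>t2. rs \<delta> t t2 \<Longrightarrow> t' = t2\<close> by blast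
  next
    case (rs_appr t2') then show ?thesis using rs_appl(1) rs_not_val by blast
  qed
next
  case (rs_appr v t t')
  from rs_appr(4) show ?case
  proof cases
    case rs_red then show ?thesis using rs_appr(2) by (metis red_App_vals rs_not_val)
  next
    case (rs_appl t2') then show ?thesis using rs_appr(1) rs_not_val by blast
  next
    case (rs_appr t2') then show ?thesis using \<open>\<And>t2. rs \<delta> t t2 \<Longrightarrow> t' = t2\<close> by blast
  qed
next
  case (rs_tapp t t' T)
  from rs_tapp(3) show ?case
  proof cases
    case rs_red then show ?thesis using rs_tapp(1) by (metis red_TApp_vals rs_not_val)
  next
    case (rs_tapp t2') then show ?thesis using \<open>\<And>t2. rs \<delta> t t2 \<Longrightarrow> t' = t2\<close> by blast
  qed
next
  case (rs_check t t' l T e)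
  from rs_check(3) show ?case
  proof cases
    case rs_red then show ?thesis using rs_check(1) by (metis red_Check_vals rs_not_val)
  next
    case (rs_check t2') then show ?thesis using \<open>\<And>t2. rs \<delta> t t2 \<Longrightarrow> t' = t2\<close> by blast
  qed
next
  case (rs_active v t t' l T e)
  from rs_active(4) show ?case
  proof cases
    case rs_red then show ?thesis using rs_active(2) by (metis red_Active_vals rs_not_val)
  next
    case (rs_active t2') then show ?thesis using \<open>\<And>t2. rs \<delta> t t2 \<Longrightarrow> t' = t2\<close> by blast
  qed
qed



lemma bf_rs: "bf t l \<Longrightarrow> rs \<delta> t t' \<Longrightarrow> False"
proof (induct arbitrary: t' rule: bf.induct)
  case (bf_blame l) then show ?case by (auto elim: rs.cases red.cases)
next
  case (bf_op vs t l p es)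
  note outer = this
  from bf_op(4) show ?case
  proof cases
    case rs_red then show ?thesis using outer(2) by (metis red_Op_vals2 bf_not_val)
  next
    case (rs_op vs' u u' es')
    have "\<not> is_val t" using outer(2) by (rule bf_not_val)
    moreover have "\<not> is_val u" using rs_op by (metis rs_not_val)
    ultimately have "vs = vs' \<and> t = u \<and> es = es'" using vals_split[of vs vs' t u es es'] outer(1) rs_op
      by auto
    then show ?thesis using outer(3) rs_op by blast
  qed
next
  case (bf_appl t l u)
  note outer = this
  from bf_appl(3) show ?case
  proof cases
    case rs_red then show ?thesis using outer(1) by (metis red_App_vals bf_not_val)
  next
    case (rs_appl t2') then show ?thesis using outer(2) by blast
  next
    case (rs_appr t2') then show ?thesis using outer(1) by (metis bf_not_val)
  qed
next
  case (bf_appr v t l)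
  note outer = this
  from bf_appr(4) show ?case
  proof cases
    case rs_red then show ?thesis using outer(2) by (metis red_App_vals bf_not_val)
  next
    case (rs_appl t2') then show ?thesis using outer(1) by (metis rs_not_val)
  next
    case (rs_appr t2') then show ?thesis using outer(3) by blast
  qed
next
  case (bf_tapp t l T)
  note outer = this
  from bf_tapp(3) show ?case
  proof cases
    case rs_red then show ?thesis using outer(1) by (metis red_TApp_vals bf_not_val)
  next
    case (rs_tapp t2') then show ?thesis using outer(2) by blast
  qed
next
  case (bf_check t l l' T e)
  note outer = this
  from bf_check(3) show ?case
  proof cases
    case rs_red then show ?thesis using outer(1) by (metis red_Check_vals bf_not_val)
  next
    case (rs_check t2') then show ?thesis using outer(2) by blast
  qed
next
  case (bf_active v t l l' T e)
  note outer = this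
  from bf_active(4) show ?case
  proof cases
    case rs_red then show ?thesis using outer(2) by (metis red_Active_vals bf_not_val)
  next
    case (rs_active t2') then show ?thesis using outer(3) by blast
  qed
qed


lemma bf_det: "bf t l1 \<Longrightarrow> bf t l2 \<Longrightarrow> l1 = l2"
proof (induct arbitrary: l2 rule: bf.induct)
  case (bf_blame l) then show ?case by (auto elim: bf.cases)
next
  case (bf_op vs t l p es)
  note outer = this
  from bf_op(4) show ?case
  proof cases
    case (bf_op vs' u es')
    have "\<not> is_val t" using outer(2) by (rule bf_not_val)
    moreover have "\<not> is_val u" using bf_op by (metis bf_not_val)
    ultimately have "vs = vs' \<and> t = u \<and> es = es'" using vals_split[of vs vs' t u es es'] bf_op outer(1)
      by auto
    then show ?thesis using bf_op outer(3) by blast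
  qed
next
  case (bf_appl t l u)
  note outer = this
  from bf_appl(3) show ?case
  proof cases
    case (bf_appl) then show ?thesis using outer(2) by blast
  next
    case (bf_appr) then show ?thesis using outer(1) by (metis bf_not_val)
  qed
next
  case (bf_appr v t l)
  note outer = this
  from bf_appr(4) show ?case
  proof cases
    case (bf_appl) then show ?thesis using outer(1) by (metis bf_not_val)
  next
    case (bf_appr) then show ?thesis using outer(3) by blast
  qed
next
  case (bf_tapp t l T)
  from bf_tapp(3) show ?case by cases (use bf_tapp(2) in blast)
next
  case (bf_check t l l' T e)
  from bf_check(3) show ?case by cases (use bf_check(2) in blast)
next
  case (bf_active v t l l' T e)
  from bf_active(4) show ?case by cases (use bf_active(3) in blast)
qed

lemma step_det: "step \<delta> t t1 \<Longrightarrow> step \<delta> t t2 \<Longrightarrow> t1 = t2"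
proof -
  assume a1: "step \<delta> t t1" and a2: "step \<delta> t t2"
  show ?thesis
  proof (cases "rs \<delta> t t1")
    case True
    then have "\<not> bf t l" for l using bf_rs by metis
    then have "rs \<delta> t t2" using a2 unfolding step_iff by blast
    then show ?thesis using True rs_det by metis
  next
    case False
    then obtain l where l: "bf t l" "t1 = Blame l" using a1 unfolding step_iff by blast
    then have "\<not> rs \<delta> t t2" using bf_rs by metis
    then obtain l' where "bf t l'" "t2 = Blame l'" using a2 unfolding step_iff by blast
    then show ?thesis using l bf_det by metis
  qed
qed


lemma Blame_nostep: "\<not> step \<delta> (Blame l) t"
  unfolding step_iff by (auto elim: rs.cases red.cases bf.cases)

lemma val_nostep: "is_val v \<Longrightarrow> \<not> step \<delta> v t"
  unfolding step_iff by (auto dest: rs_not_val bf_not_val)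

lemma steps_Blame: "steps \<delta> (Blame l) t \<Longrightarrow> t = Blame l"
  by (auto elim: converse_rtranclpE simp: Blame_nostep)

lemma steps_val: "steps \<delta> v t \<Longrightarrow> is_val v \<Longrightarrow> t = v"
  by (auto elim: converse_rtranclpE simp: val_nostep)

lemma rs_step: "rs \<delta> t t' \<Longrightarrow> step \<delta> t t'"
  unfolding step_iff by blast

lemma rs_fill_step: "rs \<delta> t t' \<Longrightarrow> ctx_ok E \<Longrightarrow> step \<delta> (fill E t) (fill E t')"
  by (rule rs_step, rule rs_fill)

lemma bf_steps: "bf t l \<Longrightarrow> steps \<delta> t (Blame l)"
proof (cases "t = Blame l")
  case False
  assume "bf t l"
  then have "step \<delta> t (Blame l)" using False unfolding step_iff by blast
  then show ?thesis by blast
qed simp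

lemma fill_eq_Blame: "fill E t = Blame l \<Longrightarrow> E = Hole \<and> t = Blame l"
  by (cases E) auto

lemma lift_steps:
  assumes "steps \<delta> t t'" "ctx_ok E"
  shows "\<exists>u. steps \<delta> (fill E t) u \<and> (u = fill E t' \<or> (\<exists>l. t' = Blame l \<and> u = Blame l))"
  using assms(1)
proof (induct rule: rtranclp_induct)
  case base then show ?case by blast
next
  case (step t1 t2)
  then obtain u where u: "steps \<delta> (fill E t) u" "u = fill E t1 \<or> (\<exists>l. t1 = Blame l \<and> u = Blame l)" by blast
  show ?case
  proof (cases "\<exists>l. t1 = Blame l")
    case True then show ?thesis using step(2) Blame_nostep by metis
  next
    case False
    then have u1: "u = fill E t1" using u(2) by blast
    from step(2) have "rs \<delta> t1 t2 \<or> (\<exists>l. bf t1 l \<and> t1 \<noteq> Blame l \<and> t2 = Blame l)" unfolding step_iff .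
    then show ?thesis
    proof
      assume "rs \<delta> t1 t2"
      then have "step \<delta> (fill E t1) (fill E t2)" using assms(2) by (rule rs_fill_step)
      then have "steps \<delta> (fill E t) (fill E t2)" using u(1) u1 by (meson rtranclp.rtrancl_into_rtrancl)
      then show ?thesis by blast
    next
      assume "\<exists>l. bf t1 l \<and> t1 \<noteq> Blame l \<and> t2 = Blame l"
      then obtain l where l: "bf t1 l" "t1 \<noteq> Blame l" "t2 = Blame l" by blast
      have "bf (fill E t1) l" using l(1) assms(2) by (rule bf_fill)
      then have "steps \<delta> (fill E t1) (Blame l)" by (rule bf_steps)
      then have "steps \<delta> (fill E t) (Blame l)" using u(1) u1 by (meson rtranclp_trans)
      then show ?thesis using l(3) by blast
    qed
  qed
qed

lemma lift_steps_Blame: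
  assumes "steps \<delta> t (Blame l)" "ctx_ok E"
  shows "steps \<delta> (fill E t) (Blame l)"
proof -
  obtain u where u: "steps \<delta> (fill E t) u" "u = fill E (Blame l) \<or> u = Blame l"
    using lift_steps[OF assms] by blast
  have "bf (fill E (Blame l)) l" using assms(2) by (intro bf_fill bf_blame)
  then have "steps \<delta> (fill E (Blame l)) (Blame l)" by (rule bf_steps)
  then show ?thesis using u by (meson rtranclp_trans)
qed

lemma rs_steps_lift: "(rs \<delta>)\<^sup>*\<^sup>* t t' \<Longrightarrow> ctx_ok E \<Longrightarrow> steps \<delta> (fill E t) (fill E t')"
proof (induct rule: rtranclp_induct)
  case (step y z) then show ?case by (meson rs_fill_step rtranclp.rtrancl_into_rtrancl)
qed simp

lemma det_steps:
  assumes "step \<delta> a a'" "steps \<delta> a b" "\<And>c. \<not> step \<delta> b c"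
  shows "steps \<delta> a' b"
  using assms(2,1,3)
proof (induct rule: converse_rtranclp_induct)
  case base then show ?case by blast
next
  case (step y z)
  then have "z = a'" using step_det by metis
  then show ?case using step by blast
qed

lemma det_steps_Blame: "step \<delta> a a' \<Longrightarrow> steps \<delta> a (Blame l) \<Longrightarrow> steps \<delta> a' (Blame l)"
  using det_steps Blame_nostep by metis


lemma BVar_nostep: "\<not> step \<delta> (BVar n) t"
  unfolding step_iff by (auto elim: rs.cases red.cases bf.cases)
lemma FVar_nostep: "\<not> step \<delta> (FVar n) t"
  unfolding step_iff by (auto elim: rs.cases red.cases bf.cases)

lemma val_open: "is_val (open_tm k u v) = (if v = BVar k then is_val u else is_val v)"
  by (cases v) auto
lemma val_openT: "is_val (openT_tm k U v) = is_val v"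
  by (cases v) auto
lemma val_close: "is_val (close_tm k y v) = (if v = FVar y then False else is_val v)"
  by (cases v) auto
lemma val_subst: "is_val v \<Longrightarrow> is_val (subst_tm x u v)"
  by (cases v) auto

locale simctx =
  fixes \<delta> :: "'p \<Rightarrow> 'k const list \<Rightarrow> 'k const option" and e1 e2 :: "('b,'k,'p,'l) tm"
  assumes st: "step \<delta> e1 e2" and lc1: "lc_tm 0 0 e1" and lc2: "lc_tm 0 0 e2"
begin

lemma e1_nv[simp]: "\<not> is_val e1"
  using st val_nostep by metis
lemma e1_ne[simp]: "e1 \<noteq> Blame l" "e1 \<noteq> BVar n" "e1 \<noteq> FVar y" "e1 \<noteq> Lam T t" "e1 \<noteq> TLam t"
  "e1 \<noteq> Cast l T1 T2" "e1 \<noteq> Const c"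
  using st Blame_nostep BVar_nostep FVar_nostep e1_nv by (metis is_val.simps)+
lemma e2_ne[simp]: "e2 \<noteq> BVar n"
  using lc2 by auto

inductive Rty :: "('b,'k,'p,'l) ty \<Rightarrow> ('b,'k,'p,'l) ty \<Rightarrow> bool"
  and Rtm :: "('b,'k,'p,'l) tm \<Rightarrow> ('b,'k,'p,'l) tm \<Rightarrow> bool" where
  R_base: "Rtm e1 e2"
| R_TBase: "Rty (TBase b) (TBase b)"
| R_TBVar: "Rty (TBVar n) (TBVar n)"
| R_TFVar: "Rty (TFVar a) (TFVar a)"
| R_TFun: "Rty T1 T1' \<Longrightarrow> Rty T2 T2' \<Longrightarrow> Rty (TFun T1 T2) (TFun T1' T2')"
| R_TAll: "Rty T T' \<Longrightarrow> Rty (TAll T) (TAll T')"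
| R_TRef: "Rty T T' \<Longrightarrow> Rtm t t' \<Longrightarrow> Rty (TRef T t) (TRef T' t')"
| R_Const: "Rtm (Const c) (Const c)"
| R_BVar: "Rtm (BVar n) (BVar n)"
| R_FVar: "Rtm (FVar y) (FVar y)"
| R_Lam: "Rty T T' \<Longrightarrow> Rtm t t' \<Longrightarrow> Rtm (Lam T t) (Lam T' t')"
| R_TLam: "Rtm t t' \<Longrightarrow> Rtm (TLam t) (TLam t')"
| R_Cast: "Rty T1 T1' \<Longrightarrow> Rty T2 T2' \<Longrightarrow> Rtm (Cast l T1 T2) (Cast l T1' T2')"
| R_Op: "list_all2 Rtm ts ts' \<Longrightarrow> Rtm (Op p ts) (Op p ts')"
| R_App: "Rtm t t' \<Longrightarrow> Rtm u u' \<Longrightarrow> Rtm (App t u) (App t' u')"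
| R_TApp: "Rtm t t' \<Longrightarrow> Rty T T' \<Longrightarrow> Rtm (TApp t T) (TApp t' T')"
| R_Check: "Rty T T' \<Longrightarrow> Rtm t t' \<Longrightarrow> Rtm u u' \<Longrightarrow> Rtm (Check l T t u) (Check l T' t' u')"
| R_Active: "Rty T T' \<Longrightarrow> Rtm t t' \<Longrightarrow> Rtm u u' \<Longrightarrow> Rtm v v' \<Longrightarrow> is_val v = is_val v' \<Longrightarrow>
     Rtm (Active l T t u v) (Active l T' t' u' v')"
| R_Blame: "Rtm (Blame l) (Blame l)"
monos list.rel_mono

lemma R_refl:
  fixes T :: "('b,'k,'p,'l) ty" and t :: "('b,'k,'p,'l) tm"
  shows "Rty T T" "Rtm t t"
  by (induct T and t) (auto intro: Rty_Rtm.intros list.rel_refl_strong)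

lemma R_subst:
  fixes T :: "('b,'k,'p,'l) ty" and t :: "('b,'k,'p,'l) tm"
  shows "gr_ty T \<Longrightarrow> Rty (subst_ty x e1 T) (subst_ty x e2 T)"
    "gr_tm t \<Longrightarrow> Rtm (subst_tm x e1 t) (subst_tm x e2 t)"
proof (induct T and t)
  case (Op p ts)
  then show ?case
    by (auto intro!: R_Op list.rel_refl_strong simp: list.rel_map list_all_iff)
qed (auto intro: Rty_Rtm.intros R_refl val_subst)

end


context simctx begin

inductive_cases Rtm_BVarE: "Rtm (BVar n) v"
inductive_cases Rtm_BVarE2: "Rtm v (BVar n)"
inductive_cases Rtm_FVarE: "Rtm (FVar n) v"
inductive_cases Rtm_FVarE2: "Rtm v (FVar n)"

lemma Rtm_BVar_iff: "Rtm v v' \<Longrightarrow> (v = BVar k) = (v' = BVar k)"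
  by (auto elim: Rtm_BVarE Rtm_BVarE2)

lemma Rtm_FVar_iff: "Rtm v v' \<Longrightarrow> y \<notin> fv_tm e2 \<Longrightarrow> (v = FVar y) = (v' = FVar y)"
  by (auto elim: Rtm_FVarE Rtm_FVarE2)

lemma R_open:
  fixes T T' :: "('b,'k,'p,'l) ty" and t t' :: "('b,'k,'p,'l) tm"
  shows "Rty T T' \<Longrightarrow> Rtm u u' \<Longrightarrow> is_val u = is_val u' \<Longrightarrow> \<forall>k. Rty (open_ty k u T) (open_ty k u' T')"
    "Rtm t t' \<Longrightarrow> Rtm u u' \<Longrightarrow> is_val u = is_val u' \<Longrightarrow> \<forall>k. Rtm (open_tm k u t) (open_tm k u' t')"
proof (induct rule: Rty_Rtm.inducts)
  case R_base
  then show ?case using open_lc(2)[OF lc1] open_lc(2)[OF lc2] by (simp add: Rty_Rtm.R_base)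
next
  case (R_Op ts ts' p)
  then show ?case by (auto simp: list.rel_map intro!: Rty_Rtm.R_Op elim!: list_all2_mono)
next
  case (R_Active T T' t t' u0 u0' v v' l)
  then show ?case by (auto intro!: Rty_Rtm.intros simp: val_open Rtm_BVar_iff[OF R_Active(7)] split: if_splits)
qed (auto intro: Rty_Rtm.intros)

lemma R_openT:
  fixes T T' :: "('b,'k,'p,'l) ty" and t t' :: "('b,'k,'p,'l) tm"
  shows "Rty T T' \<Longrightarrow> Rty U U' \<Longrightarrow> \<forall>k. Rty (openT_ty k U T) (openT_ty k U' T')"
    "Rtm t t' \<Longrightarrow> Rty U U' \<Longrightarrow> \<forall>k. Rtm (openT_tm k U t) (openT_tm k U' t')"
proof (induct rule: Rty_Rtm.inducts)
  case R_base
  then show ?case using openT_lc(2)[OF lc1] openT_lc(2)[OF lc2] by (simp add: Rty_Rtm.R_base)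
next
  case (R_Op ts ts' p)
  then show ?case by (auto simp: list.rel_map intro!: Rty_Rtm.R_Op elim!: list_all2_mono)
qed (auto intro: Rty_Rtm.intros simp: val_openT)

lemma R_close:
  fixes T T' :: "('b,'k,'p,'l) ty" and t t' :: "('b,'k,'p,'l) tm"
  shows "Rty T T' \<Longrightarrow> y \<notin> fv_tm e1 \<Longrightarrow> y \<notin> fv_tm e2 \<Longrightarrow> \<forall>k. Rty (close_ty k y T) (close_ty k y T')"
    "Rtm t t' \<Longrightarrow> y \<notin> fv_tm e1 \<Longrightarrow> y \<notin> fv_tm e2 \<Longrightarrow> \<forall>k. Rtm (close_tm k y t) (close_tm k y t')"
proof (induct rule: Rty_Rtm.inducts)
  case R_base
  then show ?case by (simp add: close_fresh Rty_Rtm.R_base)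
next
  case (R_Op ts ts' p)
  then show ?case by (auto simp: list.rel_map intro!: Rty_Rtm.R_Op elim!: list_all2_mono)
next
  case (R_Active T T' t t' u0 u0' v v' l)
  then show ?case by (auto intro!: Rty_Rtm.intros simp: val_close Rtm_FVar_iff[OF R_Active(7)] split: if_splits)
qed (auto intro: Rty_Rtm.intros)

lemma Rtm_val_l: "Rtm a b \<Longrightarrow> is_val a \<Longrightarrow> is_val b"
  by (erule Rtm.cases) auto
lemma Rtm_val_r: "Rtm a b \<Longrightarrow> is_val b \<Longrightarrow> is_val a \<or> (a = e1 \<and> b = e2)"
  by (erule Rtm.cases) auto
lemma Rtm_Const_l: "Rtm (Const c) b \<Longrightarrow> b = Const c"
  by (erule Rtm.cases) auto
lemma Rtm_Const_r: "Rtm a (Const c) \<Longrightarrow> a = Const c \<or> (a = e1 \<and> e2 = Const c)"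
  by (erule Rtm.cases) auto
lemma Rtm_Blame_l: "Rtm (Blame l) b \<Longrightarrow> b = Blame l"
  by (erule Rtm.cases) auto
lemma Rtm_Blame_r: "Rtm a (Blame l) \<Longrightarrow> a = Blame l \<or> (a = e1 \<and> e2 = Blame l)"
  by (erule Rtm.cases) auto
lemma Rtm_Lam_l: "Rtm (Lam T t) b \<Longrightarrow> \<exists>T' t'. b = Lam T' t' \<and> Rty T T' \<and> Rtm t t'"
  by (erule Rtm.cases) auto
lemma Rtm_Lam_r: "Rtm a (Lam T' t') \<Longrightarrow> is_val a \<Longrightarrow> \<exists>T t. a = Lam T t \<and> Rty T T' \<and> Rtm t t'"
  by (erule Rtm.cases) auto
lemma Rtm_TLam_l: "Rtm (TLam t) b \<Longrightarrow> \<exists>t'. b = TLam t' \<and> Rtm t t'"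
  by (erule Rtm.cases) auto
lemma Rtm_TLam_r: "Rtm a (TLam t') \<Longrightarrow> is_val a \<Longrightarrow> \<exists>t. a = TLam t \<and> Rtm t t'"
  by (erule Rtm.cases) auto
lemma Rtm_Cast_l: "Rtm (Cast l T1 T2) b \<Longrightarrow> \<exists>T1' T2'. b = Cast l T1' T2' \<and> Rty T1 T1' \<and> Rty T2 T2'"
  by (erule Rtm.cases) auto
lemma Rtm_Cast_r: "Rtm a (Cast l T1' T2') \<Longrightarrow> is_val a \<Longrightarrow> \<exists>T1 T2. a = Cast l T1 T2 \<and> Rty T1 T1' \<and> Rty T2 T2'"
  by (erule Rtm.cases) auto

lemma Rty_TBase_l: "Rty (TBase B) T \<Longrightarrow> T = TBase B"
  by (erule Rty.cases) auto
lemma Rty_TBase_r: "Rty T (TBase B) \<Longrightarrow> T = TBase B"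
  by (erule Rty.cases) auto
lemma Rty_TFun_l: "Rty (TFun A B) T \<Longrightarrow> \<exists>A' B'. T = TFun A' B' \<and> Rty A A' \<and> Rty B B'"
  by (erule Rty.cases) auto
lemma Rty_TFun_r: "Rty T (TFun A' B') \<Longrightarrow> \<exists>A B. T = TFun A B \<and> Rty A A' \<and> Rty B B'"
  by (erule Rty.cases) auto
lemma Rty_TAll_l: "Rty (TAll A) T \<Longrightarrow> \<exists>A'. T = TAll A' \<and> Rty A A'"
  by (erule Rty.cases) auto
lemma Rty_TAll_r: "Rty T (TAll A') \<Longrightarrow> \<exists>A. T = TAll A \<and> Rty A A'"
  by (erule Rty.cases) auto
lemma Rty_TRef_l: "Rty (TRef A e) T \<Longrightarrow> \<exists>A' e'. T = TRef A' e' \<and> Rty A A' \<and> Rtm e e'"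
  by (erule Rty.cases) auto
lemma Rty_TRef_r: "Rty T (TRef A' e') \<Longrightarrow> \<exists>A e. T = TRef A e \<and> Rty A A' \<and> Rtm e e'"
  by (erule Rty.cases) auto
lemma Rty_is_ref: "Rty T T' \<Longrightarrow> is_ref T' = is_ref T"
  by (erule Rty.cases) auto

end


lemma fresh2: assumes "finite (S::nat set)" shows "\<exists>c d. c \<noteq> d \<and> c \<notin> S \<and> d \<notin> S"
proof -
  let ?m = "Suc (Max (insert 0 S))"
  have "x \<le> Max (insert 0 S)" if "x \<in> S" for x using assms that by simp
  then have "?m \<notin> S" "Suc ?m \<notin> S" by (meson Suc_n_not_le_n le_Suc_eq)+
  then show ?thesis by (metis n_not_Suc_n)
qed

context simctx begin

lemma R_cf:
  assumes "Rty A11 B11" "Rty A12 B12" "Rty A21 B21" "Rty A22 B22" "Rtm va vb"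
    "c \<notin> fv_tm e1" "c \<notin> fv_tm e2" "d \<notin> fv_tm e1" "d \<notin> fv_tm e2"
  shows "Rtm (cf l A11 A12 A21 A22 va c d) (cf l B11 B12 B21 B22 vb c d)"
  unfolding cf_def
  by (intro Rty_Rtm.intros R_close(2)[rule_format] R_open(1)[rule_format] assms) simp_all

lemma red_fwd_App:
  assumes "Rtm a1 b1" "Rtm a2 b2" "red \<delta> (App a1 a2) a'"
  shows "\<exists>b'. red \<delta> (App b1 b2) b' \<and> Rtm a' b'"
  using assms(3)
proof cases
  case (r_beta T e)
  then obtain T' e' where b1: "b1 = Lam T' e'" "Rtm e e'" using Rtm_Lam_l assms(1) by blast
  have "is_val b2" using Rtm_val_l assms(2) r_beta by blast
  then show ?thesis using b1 r_beta assms(2)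
    by (intro exI[of _ "open_tm 0 b2 e'"]) (auto intro: red.intros R_open(2)[rule_format])
next
  case (r_cbase l B)
  then obtain T1' T2' where "b1 = Cast l T1' T2'" "Rty (TBase B) T1'" "Rty (TBase B) T2'"
    using Rtm_Cast_l assms(1) by blast
  then show ?thesis using r_cbase assms(2) Rtm_val_l
    by (intro exI[of _ b2]) (auto dest!: Rty_TBase_l intro: red.intros)
next
  case (r_cfun a b T11 T12 T21 T22 l)
  then obtain B1 B2 where "b1 = Cast l B1 B2" "Rty (TFun T11 T12) B1" "Rty (TFun T21 T22) B2"
    using Rtm_Cast_l assms(1) by blast
  then obtain B11 B12 B21 B22 where b1: "b1 = Cast l (TFun B11 B12) (TFun B21 B22)"
    "Rty T11 B11" "Rty T12 B12" "Rty T21 B21" "Rty T22 B22"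
    using Rty_TFun_l by metis
  have vb: "is_val b2" using Rtm_val_l assms(2) r_cfun by blast
  let ?S = "fv_ty T11 \<union> fv_ty T12 \<union> fv_ty T21 \<union> fv_ty T22 \<union> fv_tm a2 \<union>
            fv_ty B11 \<union> fv_ty B12 \<union> fv_ty B21 \<union> fv_ty B22 \<union> fv_tm b2 \<union> fv_tm e1 \<union> fv_tm e2"
  obtain c d where cd: "c \<noteq> d" "c \<notin> ?S" "d \<notin> ?S" using fresh2[of ?S] fv_finite by (metis finite_Un)
  have "a' = cf l T11 T12 T21 T22 a2 a b" using r_cfun unfolding cf_def by simp
  also have "\<dots> = cf l T11 T12 T21 T22 a2 c d"
    by (rule cf_indep) (use r_cfun cd in auto)
  finally have a': "a' = cf l T11 T12 T21 T22 a2 c d" .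
  have "red \<delta> (App b1 b2) (cf l B11 B12 B21 B22 b2 c d)"
    unfolding b1 red_cfun_iff using vb cd by blast
  moreover have "Rtm a' (cf l B11 B12 B21 B22 b2 c d)"
    unfolding a' by (rule R_cf) (use b1 assms(2) cd in auto)
  ultimately show ?thesis by blast
next
  case (r_call l T1 T2)
  then obtain B1 B2 where "b1 = Cast l B1 B2" "Rty (TAll T1) B1" "Rty (TAll T2) B2"
    using Rtm_Cast_l assms(1) by blast
  then obtain B1' B2' where b1: "b1 = Cast l (TAll B1') (TAll B2')" "Rty T1 B1'" "Rty T2 B2'"
    using Rty_TAll_l by metis
  have vb: "is_val b2" using Rtm_val_l assms(2) r_call by blast
  show ?thesis using b1 vb r_call assms(2)
    by (intro exI[of _ "TLam (App (Cast l B1' B2') (TApp b2 (TBVar 0)))"]) (auto intro: red.intros Rty_Rtm.intros)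
next
  case (r_cforget l T1 e T2)
  then obtain B1 B2 where "b1 = Cast l B1 B2" "Rty (TRef T1 e) B1" "Rty T2 B2"
    using Rtm_Cast_l assms(1) by blast
  then obtain B1' e' where b1: "b1 = Cast l (TRef B1' e') B2" "Rty T1 B1'" "Rty T2 B2"
    using Rty_TRef_l by metis
  have vb: "is_val b2" using Rtm_val_l assms(2) r_cforget by blast
  show ?thesis using b1 vb r_cforget assms(2)
    by (intro exI[of _ "App (Cast l B1' B2) b2"]) (auto intro: red.intros Rty_Rtm.intros)
next
  case (r_cprecheck T1 l T2 e)
  then obtain B1 B2 where "b1 = Cast l B1 B2" "Rty T1 B1" "Rty (TRef T2 e) B2"
    using Rtm_Cast_l assms(1) by blast
  then obtain B2' e' where b1: "b1 = Cast l B1 (TRef B2' e')" "Rty T1 B1" "Rty T2 B2'" "Rtm e e'"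
    using Rty_TRef_l by metis
  have vb: "is_val b2" using Rtm_val_l assms(2) r_cprecheck by blast
  have "\<not> is_ref B1" using b1(2) r_cprecheck Rty_is_ref by metis
  then show ?thesis using b1 vb r_cprecheck assms(2)
    by (intro exI[of _ "Check l B2' e' (App (Cast l B1 B2') b2)"]) (auto intro: red.intros Rty_Rtm.intros)
qed

lemma red_bwd_App:
  assumes "Rtm a1 b1" "Rtm a2 b2" "is_val a1" "is_val a2" "red \<delta> (App b1 b2) b'"
  shows "\<exists>a'. red \<delta> (App a1 a2) a' \<and> Rtm a' b'"
  using assms(5)
proof cases
  case (r_beta T' e')
  then obtain T e where a1: "a1 = Lam T e" "Rtm e e'" using Rtm_Lam_r assms(1,3) by blast
  then show ?thesis using r_beta assms(2,4)
    by (intro exI[of _ "open_tm 0 a2 e"]) (auto intro: red.intros R_open(2)[rule_format])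
next
  case (r_cbase l B)
  then obtain T1 T2 where "a1 = Cast l T1 T2" "Rty T1 (TBase B)" "Rty T2 (TBase B)"
    using Rtm_Cast_r assms(1,3) by blast
  then show ?thesis using r_cbase assms(2,4)
    by (intro exI[of _ a2]) (auto dest!: Rty_TBase_r intro: red.intros)
next
  case (r_cfun a b B11 B12 B21 B22 l)
  then obtain A1 A2 where "a1 = Cast l A1 A2" "Rty A1 (TFun B11 B12)" "Rty A2 (TFun B21 B22)"
    using Rtm_Cast_r assms(1,3) by blast
  then obtain T11 T12 T21 T22 where a1: "a1 = Cast l (TFun T11 T12) (TFun T21 T22)"
    "Rty T11 B11" "Rty T12 B12" "Rty T21 B21" "Rty T22 B22"
    using Rty_TFun_r by metis
  let ?S = "fv_ty T11 \<union> fv_ty T12 \<union> fv_ty T21 \<union> fv_ty T22 \<union> fv_tm a2 \<union>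
            fv_ty B11 \<union> fv_ty B12 \<union> fv_ty B21 \<union> fv_ty B22 \<union> fv_tm b2 \<union> fv_tm e1 \<union> fv_tm e2"
  obtain c d where cd: "c \<noteq> d" "c \<notin> ?S" "d \<notin> ?S" using fresh2[of ?S] fv_finite by (metis finite_Un)
  have "b' = cf l B11 B12 B21 B22 b2 a b" using r_cfun unfolding cf_def by simp
  also have "\<dots> = cf l B11 B12 B21 B22 b2 c d"
    by (rule cf_indep) (use r_cfun cd in auto)
  finally have b': "b' = cf l B11 B12 B21 B22 b2 c d" .
  have "red \<delta> (App a1 a2) (cf l T11 T12 T21 T22 a2 c d)"
    unfolding a1 red_cfun_iff using assms(4) cd by blast
  moreover have "Rtm (cf l T11 T12 T21 T22 a2 c d) b'"
    unfolding b' by (rule R_cf) (use a1 assms(2) cd in auto)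
  ultimately show ?thesis by blast
next
  case (r_call l T1 T2)
  then obtain A1 A2 where "a1 = Cast l A1 A2" "Rty A1 (TAll T1)" "Rty A2 (TAll T2)"
    using Rtm_Cast_r assms(1,3) by blast
  then obtain A1' A2' where a1: "a1 = Cast l (TAll A1') (TAll A2')" "Rty A1' T1" "Rty A2' T2"
    using Rty_TAll_r by metis
  show ?thesis using a1 assms(2,4) r_call
    by (intro exI[of _ "TLam (App (Cast l A1' A2') (TApp a2 (TBVar 0)))"]) (auto intro: red.intros Rty_Rtm.intros)
next
  case (r_cforget l T1 e T2)
  then obtain A1 A2 where "a1 = Cast l A1 A2" "Rty A1 (TRef T1 e)" "Rty A2 T2"
    using Rtm_Cast_r assms(1,3) by blast
  then obtain A1' e' where a1: "a1 = Cast l (TRef A1' e') A2" "Rty A1' T1" "Rty A2 T2"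
    using Rty_TRef_r by metis
  show ?thesis using a1 assms(2,4) r_cforget
    by (intro exI[of _ "App (Cast l A1' A2) a2"]) (auto intro: red.intros Rty_Rtm.intros)
next
  case (r_cprecheck T1 l T2 e)
  then obtain A1 A2 where "a1 = Cast l A1 A2" "Rty A1 T1" "Rty A2 (TRef T2 e)"
    using Rtm_Cast_r assms(1,3) by blast
  then obtain A2' e' where a1: "a1 = Cast l A1 (TRef A2' e')" "Rty A1 T1" "Rty A2' T2" "Rtm e' e"
    using Rty_TRef_r by metis
  have "\<not> is_ref A1" using a1(2) r_cprecheck Rty_is_ref by metis
  then show ?thesis using a1 assms(2,4) r_cprecheck
    by (intro exI[of _ "Check l A2' e' (App (Cast l A1 A2') a2)"]) (auto intro: red.intros Rty_Rtm.intros)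
qed

lemma red_fwd_TApp:
  assumes "Rtm a1 b1" "Rty T T'" "red \<delta> (TApp a1 T) a'"
  shows "\<exists>b'. red \<delta> (TApp b1 T') b' \<and> Rtm a' b'"
  using assms(3)
proof cases
  case (r_tbeta e)
  then obtain e' where "b1 = TLam e'" "Rtm e e'" using Rtm_TLam_l assms(1) by blast
  then show ?thesis using r_tbeta assms(2)
    by (intro exI[of _ "openT_tm 0 T' e'"]) (auto intro: red.intros R_openT(2)[rule_format])
qed

lemma red_bwd_TApp:
  assumes "Rtm a1 b1" "Rty T T'" "is_val a1" "red \<delta> (TApp b1 T') b'"
  shows "\<exists>a'. red \<delta> (TApp a1 T) a' \<and> Rtm a' b'"
  using assms(4)
proof cases
  case (r_tbeta e')
  then obtain e where "a1 = TLam e" "Rtm e e'" using Rtm_TLam_r assms(1,3) by blast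
  then show ?thesis using r_tbeta assms(2)
    by (intro exI[of _ "openT_tm 0 T e"]) (auto intro: red.intros R_openT(2)[rule_format])
qed

lemma list_Rtm_Const_l: "list_all2 Rtm (map Const ks) ts' \<Longrightarrow> ts' = map Const ks"
  by (induct ks arbitrary: ts') (auto simp: list_all2_Cons1 dest: Rtm_Const_l)

lemma list_Rtm_Const_r: "list_all2 Rtm ts (map Const ks) \<Longrightarrow> \<forall>t\<in>set ts. is_val t \<Longrightarrow> ts = map Const ks"
  by (induct ks arbitrary: ts) (auto simp: list_all2_Cons2 dest: Rtm_Const_r)

lemma red_fwd_Op:
  assumes "list_all2 Rtm ts ts'" "red \<delta> (Op p ts) a'"
  shows "\<exists>b'. red \<delta> (Op p ts') b' \<and> Rtm a' b'"
  using assms(2)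
proof cases
  case (r_op ks k)
  then have "ts' = map Const ks" using assms(1) list_Rtm_Const_l by simp
  then have "red \<delta> (Op p ts') (Const k)" using r_op by (simp add: red.r_op)
  then show ?thesis using r_op by (blast intro: Rty_Rtm.R_Const)
qed

lemma red_bwd_Op:
  assumes "list_all2 Rtm ts ts'" "\<forall>t\<in>set ts. is_val t" "red \<delta> (Op p ts') b'"
  shows "\<exists>a'. red \<delta> (Op p ts) a' \<and> Rtm a' b'"
  using assms(3)
proof cases
  case (r_op ks k)
  then have "ts = map Const ks" using assms(1,2) list_Rtm_Const_r by simp
  then have "red \<delta> (Op p ts) (Const k)" using r_op by (simp add: red.r_op)
  then show ?thesis using r_op by (blast intro: Rty_Rtm.R_Const)
qed

lemma red_fwd_Check:
  assumes "Rty T T'" "Rtm t t'" "Rtm u u'" "red \<delta> (Check l T t u) a'"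
  shows "\<exists>b'. red \<delta> (Check l T' t' u') b' \<and> Rtm a' b'"
  using assms(4)
proof cases
  case r_check
  then have "is_val u'" using Rtm_val_l assms(3) by blast
  then show ?thesis using r_check assms
    by (intro exI[of _ "Active l T' t' (open_tm 0 u' t') u'"])
       (auto intro!: red.intros Rty_Rtm.intros R_open(2)[rule_format])
qed

lemma red_bwd_Check:
  assumes "Rty T T'" "Rtm t t'" "Rtm u u'" "is_val u" "red \<delta> (Check l T' t' u') b'"
  shows "\<exists>a'. red \<delta> (Check l T t u) a' \<and> Rtm a' b'"
  using assms(5)
proof cases
  case r_check
  then show ?thesis using assms
    by (intro exI[of _ "Active l T t (open_tm 0 u t) u"])
       (auto intro!: red.intros Rty_Rtm.intros R_open(2)[rule_format])
qed

lemma red_fwd_Active: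
  assumes "Rtm c c'" "Rtm v v'" "is_val v = is_val v'" "red \<delta> (Active l T t c v) a'"
  shows "\<exists>b'. red \<delta> (Active l T' t' c' v') b' \<and> Rtm a' b'"
  using assms(4)
proof cases
  case r_ok
  then show ?thesis using assms Rtm_Const_l by (auto intro!: red.intros)
next
  case r_fail
  then show ?thesis using assms Rtm_Const_l by (auto intro!: red.intros Rty_Rtm.intros)
qed

lemma red_bwd_Active:
  assumes "Rtm c c'" "Rtm v v'" "is_val v = is_val v'" "is_val c" "red \<delta> (Active l T' t' c' v') b'"
  shows "\<exists>a'. red \<delta> (Active l T t c v) a' \<and> Rtm a' b'"
  using assms(5)
proof cases
  case r_ok
  then have "c = Const (CBool True)" using assms(1,4) Rtm_Const_r e1_nv by metis
  moreover have "is_val v" using assms(3) r_ok by simp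
  ultimately show ?thesis using assms(2) r_ok by (blast intro: red.r_ok)
next
  case r_fail
  then have "c = Const (CBool False)" using assms(1,4) Rtm_Const_r e1_nv by metis
  moreover have "is_val v" using assms(3) r_fail by simp
  ultimately show ?thesis using r_fail by (blast intro: red.r_fail Rty_Rtm.R_Blame)
qed

end


lemma red_Active_v: "red \<delta> (Active l T e c v) r \<Longrightarrow> is_val v"
  by (erule red.cases) auto

lemma rs_BVar: "\<not> rs \<delta> (BVar n) t" using rs_step BVar_nostep by metis
lemma rs_FVar: "\<not> rs \<delta> (FVar n) t" using rs_step FVar_nostep by metis
lemma rs_Blame: "\<not> rs \<delta> (Blame l) t" using rs_step Blame_nostep by metis

lemma bf_BVar: "\<not> bf (BVar n) l" by (auto elim: bf.cases)
lemma bf_FVar: "\<not> bf (FVar n) l" by (auto elim: bf.cases)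

context simctx begin

definition S where "S a b \<longleftrightarrow> Rtm a b \<or> (\<exists>l. steps \<delta> a (Blame l) \<and> steps \<delta> b (Blame l))"

lemma S_refl: "S t t" unfolding S_def using R_refl(2) by (rule disjI1)

lemma to_blame_l: assumes "S x (Blame l)" shows "steps \<delta> x (Blame l)"
  using assms[unfolded S_def]
proof
  assume "Rtm x (Blame l)"
  then have "x = Blame l \<or> (x = e1 \<and> e2 = Blame l)" by (rule Rtm_Blame_r)
  then show ?thesis
  proof
    assume "x = Blame l" then show ?thesis by simp
  next
    assume h: "x = e1 \<and> e2 = Blame l"
    have "step \<delta> x (Blame l)" using st h by simp
    then show ?thesis by (rule r_into_rtranclp)
  qed
next
  assume "\<exists>l'. steps \<delta> x (Blame l') \<and> steps \<delta> (Blame l) (Blame l')"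
  then show ?thesis
  proof (elim exE conjE)
    fix l' assume h: "steps \<delta> x (Blame l')" "steps \<delta> (Blame l) (Blame l')"
    have "l' = l" using steps_Blame[OF h(2)] by simp
    then show ?thesis using h(1) by simp
  qed
qed

lemma to_blame_r: assumes "S (Blame l) y" shows "steps \<delta> y (Blame l)"
  using assms[unfolded S_def]
proof
  assume "Rtm (Blame l) y"
  then have "y = Blame l" by (rule Rtm_Blame_l)
  then show ?thesis by simp
next
  assume "\<exists>l'. steps \<delta> (Blame l) (Blame l') \<and> steps \<delta> y (Blame l')"
  then show ?thesis
  proof (elim exE conjE)
    fix l' assume h: "steps \<delta> (Blame l) (Blame l')" "steps \<delta> y (Blame l')"
    have "l' = l" using steps_Blame[OF h(1)] by simp
    then show ?thesis using h(2) by simp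
  qed
qed

lemma liftS_fwd:
  assumes "S x y" "steps \<delta> y0 y" "ctx_ok Ea" "ctx_ok Eb"
    "\<And>x y. Rtm x y \<Longrightarrow> Rtm (fill Ea x) (fill Eb y)"
  shows "\<exists>v. steps \<delta> (fill Eb y0) v \<and> S (fill Ea x) v"
proof -
  obtain u where u: "steps \<delta> (fill Eb y0) u" "u = fill Eb y \<or> (\<exists>l. y = Blame l \<and> u = Blame l)"
    using lift_steps[OF assms(2,4)] by metis
  from u(2) show ?thesis
  proof
    assume u1: "u = fill Eb y"
    from assms(1)[unfolded S_def] show ?thesis
    proof
      assume "Rtm x y" then have "Rtm (fill Ea x) (fill Eb y)" by (rule assms(5))
      then have "S (fill Ea x) u" unfolding S_def u1 by simp
      then show ?thesis using u(1) by (intro exI[of _ u]) simp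
    next
      assume "\<exists>l. steps \<delta> x (Blame l) \<and> steps \<delta> y (Blame l)"
      then obtain l where h: "steps \<delta> x (Blame l)" "steps \<delta> y (Blame l)" by metis
      have "steps \<delta> (fill Ea x) (Blame l)" "steps \<delta> (fill Eb y) (Blame l)"
        using lift_steps_Blame[OF h(1) assms(3)] lift_steps_Blame[OF h(2) assms(4)] by simp_all
      then have "S (fill Ea x) (fill Eb y)" unfolding S_def by (intro disjI2 exI[of _ l]) simp
      then show ?thesis using u(1) u1 by (intro exI[of _ u]) simp
    qed
  next
    assume "\<exists>l. y = Blame l \<and> u = Blame l"
    then obtain l where l: "y = Blame l" "u = Blame l" by metis
    have "steps \<delta> x (Blame l)" using to_blame_l assms(1) l(1) by simp
    then have "steps \<delta> (fill Ea x) (Blame l)" using lift_steps_Blame assms(3) by metis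
    then have "S (fill Ea x) u" unfolding S_def l by (intro disjI2 exI[of _ l]) simp
    then show ?thesis using u(1) by (intro exI[of _ u]) simp
  qed
qed

lemma liftS_bwd:
  assumes "S x y" "steps \<delta> x0 x" "ctx_ok Ea" "ctx_ok Eb"
    "\<And>x y. Rtm x y \<Longrightarrow> Rtm (fill Ea x) (fill Eb y)"
  shows "\<exists>u. steps \<delta> (fill Ea x0) u \<and> S u (fill Eb y)"
proof -
  obtain u where u: "steps \<delta> (fill Ea x0) u" "u = fill Ea x \<or> (\<exists>l. x = Blame l \<and> u = Blame l)"
    using lift_steps[OF assms(2,3)] by metis
  from u(2) show ?thesis
  proof
    assume u1: "u = fill Ea x"
    from assms(1)[unfolded S_def] show ?thesis
    proof
      assume "Rtm x y" then have "Rtm (fill Ea x) (fill Eb y)" by (rule assms(5))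
      then have "S u (fill Eb y)" unfolding S_def u1 by simp
      then show ?thesis using u(1) by (intro exI[of _ u]) simp
    next
      assume "\<exists>l. steps \<delta> x (Blame l) \<and> steps \<delta> y (Blame l)"
      then obtain l where h: "steps \<delta> x (Blame l)" "steps \<delta> y (Blame l)" by metis
      have "steps \<delta> (fill Ea x) (Blame l)" "steps \<delta> (fill Eb y) (Blame l)"
        using lift_steps_Blame[OF h(1) assms(3)] lift_steps_Blame[OF h(2) assms(4)] by simp_all
      then have "S (fill Ea x) (fill Eb y)" unfolding S_def by (intro disjI2 exI[of _ l]) simp
      then show ?thesis using u(1) u1 by (intro exI[of _ u]) simp
    qed
  next
    assume "\<exists>l. x = Blame l \<and> u = Blame l"
    then obtain l where l: "x = Blame l" "u = Blame l" by metis
    have "steps \<delta> y (Blame l)" using to_blame_r assms(1) l(1) by simp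
    then have "steps \<delta> (fill Eb y) (Blame l)" using lift_steps_Blame assms(4) by metis
    then have "S u (fill Eb y)" unfolding S_def l by (intro disjI2 exI[of _ l]) simp
    then show ?thesis using u(1) by (intro exI[of _ u]) simp
  qed
qed

lemma to_val: "Rtm a b \<Longrightarrow> is_val b \<Longrightarrow> \<exists>a0. (rs \<delta>)\<^sup>*\<^sup>* a a0 \<and> is_val a0 \<and> Rtm a0 b"
proof -
  assume ab: "Rtm a b" and vb: "is_val b"
  from Rtm_val_r[OF ab vb] show ?thesis
  proof
    assume "is_val a" then show ?thesis using ab by (intro exI[of _ a]) simp
  next
    assume h: "a = e1 \<and> b = e2"
    have "rs \<delta> e1 e2" using st vb h unfolding step_iff by auto
    then have "(rs \<delta>)\<^sup>*\<^sup>* a e2" using h by (simp add: r_into_rtranclp)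
    then show ?thesis using h vb R_refl(2)[of e2] by (intro exI[of _ e2]) simp
  qed
qed

lemma list_vals_l: "list_all2 Rtm vs ws \<Longrightarrow> \<forall>v\<in>set vs. is_val v \<Longrightarrow> \<forall>w\<in>set ws. is_val w"
  by (induct rule: list_all2_induct) (auto dest: Rtm_val_l)

lemma to_val_list:
  "list_all2 Rtm vs ws \<Longrightarrow> \<forall>w\<in>set ws. is_val w \<Longrightarrow>
   \<exists>vs0. list_all2 Rtm vs0 ws \<and> (\<forall>v\<in>set vs0. is_val v) \<and>
     (\<forall>pre es p. (\<forall>v\<in>set pre. is_val v) \<longrightarrow> steps \<delta> (Op p (pre @ vs @ es)) (Op p (pre @ vs0 @ es)))"
proof (induct rule: list_all2_induct)
  case Nil then show ?case by auto
next
  case (Cons a vs b ws)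
  have vb: "is_val b" using Cons(4) by simp
  obtain a0 where a0: "(rs \<delta>)\<^sup>*\<^sup>* a a0" "is_val a0" "Rtm a0 b" using to_val[OF Cons(1) vb] by metis
  have "\<forall>w\<in>set ws. is_val w" using Cons(4) by simp
  from Cons(3)[OF this] obtain vs0 where vs0: "list_all2 Rtm vs0 ws" "\<forall>v\<in>set vs0. is_val v"
    "\<forall>pre es p. (\<forall>v\<in>set pre. is_val v) \<longrightarrow> steps \<delta> (Op p (pre @ vs @ es)) (Op p (pre @ vs0 @ es))"
    by metis
  have "steps \<delta> (Op p (pre @ a # vs @ es)) (Op p (pre @ a0 # vs0 @ es))"
    if pre: "\<forall>v\<in>set pre. is_val v" for pre es p
  proof -
    have "steps \<delta> (fill (COp p pre Hole (vs @ es)) a) (fill (COp p pre Hole (vs @ es)) a0)"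
      using a0(1) pre by (intro rs_steps_lift) auto
    then have 1: "steps \<delta> (Op p (pre @ a # vs @ es)) (Op p (pre @ a0 # vs @ es))" by simp
    have "\<forall>v\<in>set (pre @ [a0]). is_val v" using pre a0(2) by simp
    then have "steps \<delta> (Op p ((pre @ [a0]) @ vs @ es)) (Op p ((pre @ [a0]) @ vs0 @ es))"
      using vs0(3) by blast
    then show ?thesis using 1 by simp
  qed
  then show ?case using a0 vs0 by (intro exI[of _ "a0 # vs0"]) auto
qed

end


lemma list_all2_split_l: "list_all2 P (vs @ t # es) ts' \<Longrightarrow>
  \<exists>ws u rest. ts' = ws @ u # rest \<and> list_all2 P vs ws \<and> P t u \<and> list_all2 P es rest"
  by (auto simp: list_all2_append1 list_all2_Cons1)

lemma list_all2_split_r: "list_all2 P ts (ws @ u # rest) \<Longrightarrow>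
  \<exists>vs t es. ts = vs @ t # es \<and> list_all2 P vs ws \<and> P t u \<and> list_all2 P es rest"
  by (auto simp: list_all2_append2 list_all2_Cons2)

lemma list_all2_conj1: "list_all2 (\<lambda>x y. P x y \<and> Q x y) xs ys \<Longrightarrow> list_all2 P xs ys"
  by (erule list_all2_mono) simp

lemma bf_simps[simp]: "\<not> bf (Const c) l" "\<not> bf (Lam T t) l" "\<not> bf (TLam t) l" "\<not> bf (Cast l' T1 T2) l"
  "\<not> bf (BVar n) l" "\<not> bf (FVar y) l"
  by (auto elim: bf.cases)

context simctx begin

lemma F2:
  shows "Rty T T' \<Longrightarrow> True" and "Rtm t t' \<Longrightarrow> \<forall>l. bf t l \<longrightarrow> bf t' l"
proof (induct rule: Rty_Rtm.inducts)
  case R_base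
  show ?case
  proof (intro allI impI)
    fix l assume "bf e1 l"
    then have "step \<delta> e1 (Blame l)" unfolding step_iff using e1_ne(1) by blast
    then have "e2 = Blame l" using st step_det by metis
    then show "bf e2 l" by (simp add: bf_blame)
  qed
next
  case (R_Op ts ts' p)
  show ?case
  proof (intro allI impI)
    fix l assume "bf (Op p ts) l"
    then obtain vs t es where h: "ts = vs @ t # es" "\<forall>v\<in>set vs. is_val v" "bf t l"
      by (cases) auto
    obtain ws u rest where w: "ts' = ws @ u # rest"
      "list_all2 (\<lambda>x y. Rtm x y \<and> (\<forall>l. bf x l \<longrightarrow> bf y l)) vs ws"
      "Rtm t u \<and> (\<forall>l. bf t l \<longrightarrow> bf u l)"
      using list_all2_split_l[OF R_Op[unfolded h(1)]] by blast
    have "\<forall>w\<in>set ws. is_val w" using list_vals_l[OF list_all2_conj1[OF w(2)] h(2)] .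
    moreover have "bf u l" using w(3) h(3) by blast
    ultimately show "bf (Op p ts') l" unfolding w(1) by (rule bf_op)
  qed
next
  case (R_App t t' u u')
  show ?case
  proof (intro allI impI)
    fix l assume "bf (App t u) l"
    then show "bf (App t' u') l"
    proof cases
      case bf_appl then show ?thesis using R_App(2) by (simp add: bf.bf_appl)
    next
      case bf_appr
      then have "is_val t'" using R_App(1) Rtm_val_l by blast
      then show ?thesis using R_App(4) bf_appr by (simp add: bf.bf_appr)
    qed
  qed
next
  case (R_TApp t t' T T')
  show ?case
  proof (intro allI impI)
    fix l assume "bf (TApp t T) l"
    then have "bf t l" by cases
    then show "bf (TApp t' T') l" using R_TApp(2) by (simp add: bf.bf_tapp)
  qed
next
  case (R_Check T T' t t' u u' l0)
  show ?case
  proof (intro allI impI)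
    fix l assume "bf (Check l0 T t u) l"
    then have "bf u l" by cases
    then show "bf (Check l0 T' t' u') l" using R_Check(6) by (simp add: bf.bf_check)
  qed
next
  case (R_Active T T' t t' u u' v v' l0)
  show ?case
  proof (intro allI impI)
    fix l assume "bf (Active l0 T t u v) l"
    then have "bf u l" "is_val v" by (cases, simp)+
    then show "bf (Active l0 T' t' u' v') l" using R_Active(6,9) by (simp add: bf.bf_active)
  qed
next
  case (R_Blame l0)
  show ?case by simp
qed simp_all

lemma B2:
  shows "Rty T T' \<Longrightarrow> True" and "Rtm t t' \<Longrightarrow> \<forall>l. bf t' l \<longrightarrow> steps \<delta> t (Blame l)"
proof (induct rule: Rty_Rtm.inducts)
  case R_base
  show ?case
  proof (intro allI impI)
    fix l assume "bf e2 l"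
    then have "steps \<delta> e2 (Blame l)" by (rule bf_steps)
    then show "steps \<delta> e1 (Blame l)" using st by (rule converse_rtranclp_into_rtranclp[rotated])
  qed
next
  case (R_Op ts ts' p)
  show ?case
  proof (intro allI impI)
    fix l assume "bf (Op p ts') l"
    then obtain ws u rest where h: "ts' = ws @ u # rest" "\<forall>v\<in>set ws. is_val v" "bf u l"
      by (cases) auto
    obtain vs t es where w: "ts = vs @ t # es"
      "list_all2 (\<lambda>x y. Rtm x y \<and> (\<forall>l. bf y l \<longrightarrow> steps \<delta> x (Blame l))) vs ws"
      "Rtm t u \<and> (\<forall>l. bf u l \<longrightarrow> steps \<delta> t (Blame l))"
      using list_all2_split_r[OF R_Op[unfolded h(1)]] by blast
    obtain vs0 where v0: "list_all2 Rtm vs0 ws" "\<forall>v\<in>set vs0. is_val v"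
      "\<forall>pre es p. (\<forall>v\<in>set pre. is_val v) \<longrightarrow> steps \<delta> (Op p (pre @ vs @ es)) (Op p (pre @ vs0 @ es))"
      using to_val_list[OF list_all2_conj1[OF w(2)] h(2)] by blast
    have "steps \<delta> (Op p ([] @ vs @ (t # es))) (Op p ([] @ vs0 @ (t # es)))"
      by (rule v0(3)[rule_format]) simp
    then have 1: "steps \<delta> (Op p ts) (Op p (vs0 @ t # es))" using w(1) by simp
    have hb: "steps \<delta> t (Blame l)" using w(3) h(3) by simp
    have "steps \<delta> (Op p (vs0 @ t # es)) (Blame l)"
      using lift_steps_Blame[OF hb, of "COp p vs0 Hole es"] v0(2) by simp
    then show "steps \<delta> (Op p ts) (Blame l)" using 1 by (rule rtranclp_trans[rotated])
  qed
next
  case (R_App t t' u u')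
  show ?case
  proof (intro allI impI)
    fix l assume "bf (App t' u') l"
    then show "steps \<delta> (App t u) (Blame l)"
    proof cases
      case bf_appl
      then have hb: "steps \<delta> t (Blame l)" using R_App(2) by simp
      show ?thesis using lift_steps_Blame[OF hb, of "CAppL Hole u"] by simp
    next
      case bf_appr
      then obtain t0 where t0: "(rs \<delta>)\<^sup>*\<^sup>* t t0" "is_val t0" "Rtm t0 t'" using to_val[OF R_App(1)] by metis
      have 1: "steps \<delta> (App t u) (App t0 u)"
        using rs_steps_lift[OF t0(1), of "CAppL Hole u"] by simp
      have hb: "steps \<delta> u (Blame l)" using R_App(4) bf_appr by simp
      have "steps \<delta> (App t0 u) (Blame l)" using lift_steps_Blame[OF hb, of "CAppR t0 Hole"] t0(2) by simp
      then show ?thesis using 1 by (rule rtranclp_trans[rotated])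
    qed
  qed
next
  case (R_TApp t t' T T')
  show ?case
  proof (intro allI impI)
    fix l assume "bf (TApp t' T') l"
    then have "bf t' l" by cases
    then have hb: "steps \<delta> t (Blame l)" using R_TApp(2) by simp
    show "steps \<delta> (TApp t T) (Blame l)" using lift_steps_Blame[OF hb, of "CTApp Hole T"] by simp
  qed
next
  case (R_Check T T' t t' u u' l0)
  show ?case
  proof (intro allI impI)
    fix l assume "bf (Check l0 T' t' u') l"
    then have "bf u' l" by cases
    then have hb: "steps \<delta> u (Blame l)" using R_Check(6) by simp
    show "steps \<delta> (Check l0 T t u) (Blame l)" using lift_steps_Blame[OF hb, of "CCheck l0 T t Hole"] by simp
  qed
next
  case (R_Active T T' t t' u u' v v' l0)
  show ?case
  proof (intro allI impI)
    fix l assume "bf (Active l0 T' t' u' v') l"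
    then have "bf u' l" "is_val v'" by (cases, simp)+
    then have "steps \<delta> u (Blame l)" using R_Active(6) by simp
    moreover have "is_val v" using R_Active(9) \<open>is_val v'\<close> by simp
    ultimately show "steps \<delta> (Active l0 T t u v) (Blame l)" using lift_steps_Blame[of \<delta> u l "CActive l0 T t Hole v"] by simp
  qed
next
  case (R_Blame l0)
  show ?case by (intro allI impI, erule bf.cases) simp_all
qed simp_all

end


lemma red_steps: "red \<delta> a b \<Longrightarrow> steps \<delta> a b"
  by (rule r_into_rtranclp, rule rs_step, rule rs_red)

lemma rs_simps[simp]: "\<not> rs \<delta> (Const c) t" "\<not> rs \<delta> (Lam T e) t" "\<not> rs \<delta> (TLam e) t"
  "\<not> rs \<delta> (Cast l T1 T2) t" "\<not> rs \<delta> (BVar n) t" "\<not> rs \<delta> (FVar y) t" "\<not> rs \<delta> (Blame l) t"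
  using rs_not_val[of \<delta> _ t] rs_BVar rs_FVar rs_Blame by fastforce+

context simctx begin

lemma F1:
  shows "Rty T T' \<Longrightarrow> True" and "Rtm t t' \<Longrightarrow> \<forall>a'. rs \<delta> t a' \<longrightarrow> (\<exists>b'. steps \<delta> t' b' \<and> S a' b')"
proof (induct rule: Rty_Rtm.inducts)
  case R_base
  show ?case
  proof (intro allI impI)
    fix a' assume "rs \<delta> e1 a'"
    then have "step \<delta> e1 a'" by (rule rs_step)
    then have "a' = e2" using st step_det by metis
    then show "\<exists>b'. steps \<delta> e2 b' \<and> S a' b'" using S_refl[of e2] by (intro exI[of _ e2]) simp
  qed
next
  case (R_Op ts ts' p)
  show ?case
  proof (intro allI impI)
    fix a' assume "rs \<delta> (Op p ts) a'"
    then show "\<exists>b'. steps \<delta> (Op p ts') b' \<and> S a' b'"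
    proof cases
      case rs_red
      then obtain b' where b': "red \<delta> (Op p ts') b'" "Rtm a' b'"
        using red_fwd_Op[OF list_all2_conj1[OF R_Op]] by metis
      show ?thesis using red_steps[OF b'(1)] b'(2) unfolding S_def by (intro exI[of _ b']) simp
    next
      case (rs_op vs t t'' es)
      obtain ws u rest where w: "ts' = ws @ u # rest"
        "list_all2 (\<lambda>x y. Rtm x y \<and> (\<forall>a'. rs \<delta> x a' \<longrightarrow> (\<exists>b'. steps \<delta> y b' \<and> S a' b'))) vs ws"
        "Rtm t u \<and> (\<forall>a'. rs \<delta> t a' \<longrightarrow> (\<exists>b'. steps \<delta> u b' \<and> S a' b'))"
        "list_all2 (\<lambda>x y. Rtm x y \<and> (\<forall>a'. rs \<delta> x a' \<longrightarrow> (\<exists>b'. steps \<delta> y b' \<and> S a' b'))) es rest"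
        using list_all2_split_l[OF R_Op[unfolded rs_op(1)]] by blast
      have L1: "list_all2 Rtm vs ws" "list_all2 Rtm es rest"
        by (rule list_all2_conj1[OF w(2)], rule list_all2_conj1[OF w(4)])
      have vw: "\<forall>w\<in>set ws. is_val w" using list_vals_l[OF L1(1)] rs_op(3) by blast
      have "\<exists>b'. steps \<delta> u b' \<and> S t'' b'" using w(3) \<open>rs \<delta> t t''\<close> by simp
      then obtain u' where u': "steps \<delta> u u'" "S t'' u'" by metis
      have "\<exists>v. steps \<delta> (fill (COp p ws Hole rest) u) v \<and> S (fill (COp p vs Hole es) t'') v"
      proof (rule liftS_fwd[OF u'(2) u'(1)])
        fix x y assume "Rtm x y"
        then show "Rtm (fill (COp p vs Hole es) x) (fill (COp p ws Hole rest) y)"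
          using L1 by (simp add: Rty_Rtm.R_Op list_all2_appendI)
      qed (use rs_op vw in simp_all)
      then obtain v where "steps \<delta> (fill (COp p ws Hole rest) u) v" "S (fill (COp p vs Hole es) t'') v" by metis
      then show ?thesis using rs_op w(1) by (intro exI[of _ v]) simp
    qed
  qed
next
  case (R_App t t' u u')
  show ?case
  proof (intro allI impI)
    fix a' assume "rs \<delta> (App t u) a'"
    then show "\<exists>b'. steps \<delta> (App t' u') b' \<and> S a' b'"
    proof cases
      case rs_red
      then obtain b' where b': "red \<delta> (App t' u') b'" "Rtm a' b'"
        using red_fwd_App[OF R_App(1) R_App(3)] by metis
      show ?thesis using red_steps[OF b'(1)] b'(2) unfolding S_def by (intro exI[of _ b']) simp
    next
      case (rs_appl t1)
      have "\<exists>b'. steps \<delta> t' b' \<and> S t1 b'" using R_App(2) \<open>rs \<delta> t t1\<close> by simp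
      then obtain b1 where b1: "steps \<delta> t' b1" "S t1 b1" by metis
      have "\<exists>v. steps \<delta> (fill (CAppL Hole u') t') v \<and> S (fill (CAppL Hole u) t1) v"
      proof (rule liftS_fwd[OF b1(2) b1(1)])
        fix x y assume "Rtm x y"
        then show "Rtm (fill (CAppL Hole u) x) (fill (CAppL Hole u') y)"
          using R_App(3) by (simp add: Rty_Rtm.R_App)
      qed simp_all
      then show ?thesis using rs_appl by simp
    next
      case (rs_appr u1)
      have vt: "is_val t'" using Rtm_val_l R_App(1) rs_appr by blast
      have "\<exists>b'. steps \<delta> u' b' \<and> S u1 b'" using R_App(4) \<open>rs \<delta> u u1\<close> by simp
      then obtain b1 where b1: "steps \<delta> u' b1" "S u1 b1" by metis
      have "\<exists>v. steps \<delta> (fill (CAppR t' Hole) u') v \<and> S (fill (CAppR t Hole) u1) v"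
      proof (rule liftS_fwd[OF b1(2) b1(1)])
        fix x y assume "Rtm x y"
        then show "Rtm (fill (CAppR t Hole) x) (fill (CAppR t' Hole) y)"
          using R_App(1) by (simp add: Rty_Rtm.R_App)
      qed (use rs_appr vt in simp_all)
      then show ?thesis using rs_appr by simp
    qed
  qed
next
  case (R_TApp t t' T T')
  show ?case
  proof (intro allI impI)
    fix a' assume "rs \<delta> (TApp t T) a'"
    then show "\<exists>b'. steps \<delta> (TApp t' T') b' \<and> S a' b'"
    proof cases
      case rs_red
      then obtain b' where b': "red \<delta> (TApp t' T') b'" "Rtm a' b'"
        using red_fwd_TApp[OF R_TApp(1) R_TApp(3)] by metis
      show ?thesis using red_steps[OF b'(1)] b'(2) unfolding S_def by (intro exI[of _ b']) simp
    next
      case (rs_tapp t1)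
      have "\<exists>b'. steps \<delta> t' b' \<and> S t1 b'" using R_TApp(2) \<open>rs \<delta> t t1\<close> by simp
      then obtain b1 where b1: "steps \<delta> t' b1" "S t1 b1" by metis
      have "\<exists>v. steps \<delta> (fill (CTApp Hole T') t') v \<and> S (fill (CTApp Hole T) t1) v"
      proof (rule liftS_fwd[OF b1(2) b1(1)])
        fix x y assume "Rtm x y"
        then show "Rtm (fill (CTApp Hole T) x) (fill (CTApp Hole T') y)"
          using R_TApp(3) by (simp add: Rty_Rtm.R_TApp)
      qed simp_all
      then show ?thesis using rs_tapp by simp
    qed
  qed
next
  case (R_Check T T' t t' u u' l)
  show ?case
  proof (intro allI impI)
    fix a' assume "rs \<delta> (Check l T t u) a'"
    then show "\<exists>b'. steps \<delta> (Check l T' t' u') b' \<and> S a' b'"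
    proof cases
      case rs_red
      then obtain b' where b': "red \<delta> (Check l T' t' u') b'" "Rtm a' b'"
        using red_fwd_Check[OF R_Check(1) R_Check(3) R_Check(5)] by metis
      show ?thesis using red_steps[OF b'(1)] b'(2) unfolding S_def by (intro exI[of _ b']) simp
    next
      case (rs_check u1)
      have "\<exists>b'. steps \<delta> u' b' \<and> S u1 b'" using R_Check(6) \<open>rs \<delta> u u1\<close> by simp
      then obtain b1 where b1: "steps \<delta> u' b1" "S u1 b1" by metis
      have "\<exists>v. steps \<delta> (fill (CCheck l T' t' Hole) u') v \<and> S (fill (CCheck l T t Hole) u1) v"
      proof (rule liftS_fwd[OF b1(2) b1(1)])
        fix x y assume "Rtm x y"
        then show "Rtm (fill (CCheck l T t Hole) x) (fill (CCheck l T' t' Hole) y)"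
          using R_Check(1,3) by (simp add: Rty_Rtm.R_Check)
      qed simp_all
      then show ?thesis using rs_check by simp
    qed
  qed
next
  case (R_Active T T' t t' u u' v v' l)
  show ?case
  proof (intro allI impI)
    fix a' assume "rs \<delta> (Active l T t u v) a'"
    then show "\<exists>b'. steps \<delta> (Active l T' t' u' v') b' \<and> S a' b'"
    proof cases
      case rs_red
      then obtain b' where b': "red \<delta> (Active l T' t' u' v') b'" "Rtm a' b'"
        using red_fwd_Active[OF R_Active(5) R_Active(7) R_Active(9)] by metis
      show ?thesis using red_steps[OF b'(1)] b'(2) unfolding S_def by (intro exI[of _ b']) simp
    next
      case (rs_active u1)
      have vv: "is_val v'" using R_Active(9) rs_active by simp
      have "\<exists>b'. steps \<delta> u' b' \<and> S u1 b'" using R_Active(6) \<open>rs \<delta> u u1\<close> by simp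
      then obtain b1 where b1: "steps \<delta> u' b1" "S u1 b1" by metis
      have "\<exists>w. steps \<delta> (fill (CActive l T' t' Hole v') u') w \<and> S (fill (CActive l T t Hole v) u1) w"
      proof (rule liftS_fwd[OF b1(2) b1(1)])
        fix x y assume "Rtm x y"
        then show "Rtm (fill (CActive l T t Hole v) x) (fill (CActive l T' t' Hole v') y)"
          using R_Active(1,3,7,9) by (simp add: Rty_Rtm.R_Active)
      qed (use rs_active vv in simp_all)
      then show ?thesis using rs_active by simp
    qed
  qed
qed simp_all

end


context simctx begin

lemma B1:
  shows "Rty T T' \<Longrightarrow> True" and "Rtm t t' \<Longrightarrow> \<forall>b'. rs \<delta> t' b' \<longrightarrow> (\<exists>a'. steps \<delta> t a' \<and> S a' b')"
proof (induct rule: Rty_Rtm.inducts)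
  case R_base
  show ?case
  proof (intro allI impI)
    fix b' assume "rs \<delta> e2 b'"
    then have "step \<delta> e2 b'" by (rule rs_step)
    then have "steps \<delta> e1 b'" using st by (meson r_into_rtranclp converse_rtranclp_into_rtranclp)
    then show "\<exists>a'. steps \<delta> e1 a' \<and> S a' b'" using S_refl[of b'] by (intro exI[of _ b']) simp
  qed
next
  case (R_Op ts ts' p)
  show ?case
  proof (intro allI impI)
    fix b' assume "rs \<delta> (Op p ts') b'"
    then show "\<exists>a'. steps \<delta> (Op p ts) a' \<and> S a' b'"
    proof cases
      case rs_red
      have vals: "\<forall>w\<in>set ts'. is_val w" using red_Op_vals[OF rs_red] .
      obtain ts0 where t0: "list_all2 Rtm ts0 ts'" "\<forall>v\<in>set ts0. is_val v"
        "\<forall>pre es p. (\<forall>v\<in>set pre. is_val v) \<longrightarrow> steps \<delta> (Op p (pre @ ts @ es)) (Op p (pre @ ts0 @ es))"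
        using to_val_list[OF list_all2_conj1[OF R_Op] vals] by blast
      have "steps \<delta> (Op p ([] @ ts @ [])) (Op p ([] @ ts0 @ []))"
        by (rule t0(3)[rule_format]) simp
      then have 1: "steps \<delta> (Op p ts) (Op p ts0)" by simp
      obtain a' where a': "red \<delta> (Op p ts0) a'" "Rtm a' b'"
        using red_bwd_Op[OF t0(1) t0(2) rs_red] by metis
      have "steps \<delta> (Op p ts) a'" using 1 red_steps[OF a'(1)] by (rule rtranclp_trans)
      then show ?thesis using a'(2) unfolding S_def by (intro exI[of _ a']) simp
    next
      case (rs_op ws u u'' rest)
      obtain vs t es where w: "ts = vs @ t # es"
        "list_all2 (\<lambda>x y. Rtm x y \<and> (\<forall>b'. rs \<delta> y b' \<longrightarrow> (\<exists>a'. steps \<delta> x a' \<and> S a' b'))) vs ws"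
        "Rtm t u \<and> (\<forall>b'. rs \<delta> u b' \<longrightarrow> (\<exists>a'. steps \<delta> t a' \<and> S a' b'))"
        "list_all2 (\<lambda>x y. Rtm x y \<and> (\<forall>b'. rs \<delta> y b' \<longrightarrow> (\<exists>a'. steps \<delta> x a' \<and> S a' b'))) es rest"
        using list_all2_split_r[OF R_Op[unfolded rs_op(1)]] by blast
      have L1: "list_all2 Rtm vs ws" "list_all2 Rtm es rest"
        by (rule list_all2_conj1[OF w(2)], rule list_all2_conj1[OF w(4)])
      obtain vs0 where v0: "list_all2 Rtm vs0 ws" "\<forall>v\<in>set vs0. is_val v"
        "\<forall>pre es p. (\<forall>v\<in>set pre. is_val v) \<longrightarrow> steps \<delta> (Op p (pre @ vs @ es)) (Op p (pre @ vs0 @ es))"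
        using to_val_list[OF L1(1) rs_op(3)] by blast
      have "steps \<delta> (Op p ([] @ vs @ (t # es))) (Op p ([] @ vs0 @ (t # es)))"
        by (rule v0(3)[rule_format]) simp
      then have 1: "steps \<delta> (Op p ts) (Op p (vs0 @ t # es))" using w(1) by simp
      have "\<exists>a'. steps \<delta> t a' \<and> S a' u''" using w(3) \<open>rs \<delta> u u''\<close> by simp
      then obtain t1 where t1: "steps \<delta> t t1" "S t1 u''" by metis
      have "\<exists>a'. steps \<delta> (fill (COp p vs0 Hole es) t) a' \<and> S a' (fill (COp p ws Hole rest) u'')"
      proof (rule liftS_bwd[OF t1(2) t1(1)])
        fix x y assume "Rtm x y"
        then show "Rtm (fill (COp p vs0 Hole es) x) (fill (COp p ws Hole rest) y)"
          using v0(1) L1(2) by (simp add: Rty_Rtm.R_Op list_all2_appendI)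
      qed (use rs_op v0(2) in simp_all)
      then obtain a' where a': "steps \<delta> (Op p (vs0 @ t # es)) a'" "S a' (Op p (ws @ u'' # rest))" by auto
      have "steps \<delta> (Op p ts) a'" using 1 a'(1) by (rule rtranclp_trans)
      then show ?thesis using a'(2) rs_op by (intro exI[of _ a']) simp
    qed
  qed
next
  case (R_App t t' u u')
  show ?case
  proof (intro allI impI)
    fix b' assume "rs \<delta> (App t' u') b'"
    then show "\<exists>a'. steps \<delta> (App t u) a' \<and> S a' b'"
    proof cases
      case rs_red
      have vs: "is_val t'" "is_val u'" using red_App_vals[OF rs_red] by simp_all
      obtain t0 where t0: "(rs \<delta>)\<^sup>*\<^sup>* t t0" "is_val t0" "Rtm t0 t'" using to_val[OF R_App(1) vs(1)] by metis
      obtain u0 where u0: "(rs \<delta>)\<^sup>*\<^sup>* u u0" "is_val u0" "Rtm u0 u'" using to_val[OF R_App(3) vs(2)] by metis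
      have 1: "steps \<delta> (App t u) (App t0 u)" using rs_steps_lift[OF t0(1), of "CAppL Hole u"] by simp
      have 2: "steps \<delta> (App t0 u) (App t0 u0)" using rs_steps_lift[OF u0(1), of "CAppR t0 Hole"] t0(2) by simp
      obtain a' where a': "red \<delta> (App t0 u0) a'" "Rtm a' b'"
        using red_bwd_App[OF t0(3) u0(3) t0(2) u0(2) rs_red] by metis
      have "steps \<delta> (App t u) a'" using rtranclp_trans[OF rtranclp_trans[OF 1 2] red_steps[OF a'(1)]] .
      then show ?thesis using a'(2) unfolding S_def by (intro exI[of _ a']) simp
    next
      case (rs_appl t1')
      have "\<exists>a'. steps \<delta> t a' \<and> S a' t1'" using R_App(2) \<open>rs \<delta> t' t1'\<close> by simp
      then obtain a1 where a1: "steps \<delta> t a1" "S a1 t1'" by metis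
      have "\<exists>a'. steps \<delta> (fill (CAppL Hole u) t) a' \<and> S a' (fill (CAppL Hole u') t1')"
      proof (rule liftS_bwd[OF a1(2) a1(1)])
        fix x y assume "Rtm x y"
        then show "Rtm (fill (CAppL Hole u) x) (fill (CAppL Hole u') y)"
          using R_App(3) by (simp add: Rty_Rtm.R_App)
      qed simp_all
      then show ?thesis using rs_appl by simp
    next
      case (rs_appr u1')
      obtain t0 where t0: "(rs \<delta>)\<^sup>*\<^sup>* t t0" "is_val t0" "Rtm t0 t'" using to_val[OF R_App(1)] rs_appr by metis
      have 1: "steps \<delta> (App t u) (App t0 u)" using rs_steps_lift[OF t0(1), of "CAppL Hole u"] by simp
      have "\<exists>a'. steps \<delta> u a' \<and> S a' u1'" using R_App(4) \<open>rs \<delta> u' u1'\<close> by simp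
      then obtain a1 where a1: "steps \<delta> u a1" "S a1 u1'" by metis
      have "\<exists>a'. steps \<delta> (fill (CAppR t0 Hole) u) a' \<and> S a' (fill (CAppR t' Hole) u1')"
      proof (rule liftS_bwd[OF a1(2) a1(1)])
        fix x y assume "Rtm x y"
        then show "Rtm (fill (CAppR t0 Hole) x) (fill (CAppR t' Hole) y)"
          using t0(3) by (simp add: Rty_Rtm.R_App)
      qed (use rs_appr t0(2) in simp_all)
      then obtain a' where a': "steps \<delta> (App t0 u) a'" "S a' (App t' u1')" by auto
      have "steps \<delta> (App t u) a'" using 1 a'(1) by (rule rtranclp_trans)
      then show ?thesis using a'(2) rs_appr by (intro exI[of _ a']) simp
    qed
  qed
next
  case (R_TApp t t' T T')
  show ?case
  proof (intro allI impI)
    fix b' assume "rs \<delta> (TApp t' T') b'"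
    then show "\<exists>a'. steps \<delta> (TApp t T) a' \<and> S a' b'"
    proof cases
      case rs_red
      have vs: "is_val t'" using red_TApp_vals[OF rs_red] .
      obtain t0 where t0: "(rs \<delta>)\<^sup>*\<^sup>* t t0" "is_val t0" "Rtm t0 t'" using to_val[OF R_TApp(1) vs] by metis
      have 1: "steps \<delta> (TApp t T) (TApp t0 T)" using rs_steps_lift[OF t0(1), of "CTApp Hole T"] by simp
      obtain a' where a': "red \<delta> (TApp t0 T) a'" "Rtm a' b'"
        using red_bwd_TApp[OF t0(3) R_TApp(3) t0(2) rs_red] by metis
      have "steps \<delta> (TApp t T) a'" using 1 red_steps[OF a'(1)] by (rule rtranclp_trans)
      then show ?thesis using a'(2) unfolding S_def by (intro exI[of _ a']) simp
    next
      case (rs_tapp t1')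
      have "\<exists>a'. steps \<delta> t a' \<and> S a' t1'" using R_TApp(2) \<open>rs \<delta> t' t1'\<close> by simp
      then obtain a1 where a1: "steps \<delta> t a1" "S a1 t1'" by metis
      have "\<exists>a'. steps \<delta> (fill (CTApp Hole T) t) a' \<and> S a' (fill (CTApp Hole T') t1')"
      proof (rule liftS_bwd[OF a1(2) a1(1)])
        fix x y assume "Rtm x y"
        then show "Rtm (fill (CTApp Hole T) x) (fill (CTApp Hole T') y)"
          using R_TApp(3) by (simp add: Rty_Rtm.R_TApp)
      qed simp_all
      then show ?thesis using rs_tapp by simp
    qed
  qed
next
  case (R_Check T T' t t' u u' l)
  show ?case
  proof (intro allI impI)
    fix b' assume "rs \<delta> (Check l T' t' u') b'"
    then show "\<exists>a'. steps \<delta> (Check l T t u) a' \<and> S a' b'"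
    proof cases
      case rs_red
      have vs: "is_val u'" using red_Check_vals[OF rs_red] .
      obtain u0 where u0: "(rs \<delta>)\<^sup>*\<^sup>* u u0" "is_val u0" "Rtm u0 u'" using to_val[OF R_Check(5) vs] by metis
      have 1: "steps \<delta> (Check l T t u) (Check l T t u0)" using rs_steps_lift[OF u0(1), of "CCheck l T t Hole"] by simp
      obtain a' where a': "red \<delta> (Check l T t u0) a'" "Rtm a' b'"
        using red_bwd_Check[OF R_Check(1) R_Check(3) u0(3) u0(2) rs_red] by metis
      have "steps \<delta> (Check l T t u) a'" using 1 red_steps[OF a'(1)] by (rule rtranclp_trans)
      then show ?thesis using a'(2) unfolding S_def by (intro exI[of _ a']) simp
    next
      case (rs_check u1')
      have "\<exists>a'. steps \<delta> u a' \<and> S a' u1'" using R_Check(6) \<open>rs \<delta> u' u1'\<close> by simp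
      then obtain a1 where a1: "steps \<delta> u a1" "S a1 u1'" by metis
      have "\<exists>a'. steps \<delta> (fill (CCheck l T t Hole) u) a' \<and> S a' (fill (CCheck l T' t' Hole) u1')"
      proof (rule liftS_bwd[OF a1(2) a1(1)])
        fix x y assume "Rtm x y"
        then show "Rtm (fill (CCheck l T t Hole) x) (fill (CCheck l T' t' Hole) y)"
          using R_Check(1,3) by (simp add: Rty_Rtm.R_Check)
      qed simp_all
      then show ?thesis using rs_check by simp
    qed
  qed
next
  case (R_Active T T' t t' u u' v v' l)
  show ?case
  proof (intro allI impI)
    fix b' assume "rs \<delta> (Active l T' t' u' v') b'"
    then show "\<exists>a'. steps \<delta> (Active l T t u v) a' \<and> S a' b'"
    proof cases
      case rs_red
      have vs: "is_val u'" using red_Active_vals[OF rs_red] .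
      have vv: "is_val v" using red_Active_v[OF rs_red] R_Active(9) by simp
      obtain u0 where u0: "(rs \<delta>)\<^sup>*\<^sup>* u u0" "is_val u0" "Rtm u0 u'" using to_val[OF R_Active(5) vs] by metis
      have 1: "steps \<delta> (Active l T t u v) (Active l T t u0 v)"
        using rs_steps_lift[OF u0(1), of "CActive l T t Hole v"] vv by simp
      obtain a' where a': "red \<delta> (Active l T t u0 v) a'" "Rtm a' b'"
        using red_bwd_Active[OF u0(3) R_Active(7) R_Active(9) u0(2) rs_red] by metis
      have "steps \<delta> (Active l T t u v) a'" using 1 red_steps[OF a'(1)] by (rule rtranclp_trans)
      then show ?thesis using a'(2) unfolding S_def by (intro exI[of _ a']) simp
    next
      case (rs_active u1')
      have vv: "is_val v" using R_Active(9) rs_active by simp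
      have "\<exists>a'. steps \<delta> u a' \<and> S a' u1'" using R_Active(6) \<open>rs \<delta> u' u1'\<close> by simp
      then obtain a1 where a1: "steps \<delta> u a1" "S a1 u1'" by metis
      have "\<exists>a'. steps \<delta> (fill (CActive l T t Hole v) u) a' \<and> S a' (fill (CActive l T' t' Hole v') u1')"
      proof (rule liftS_bwd[OF a1(2) a1(1)])
        fix x y assume "Rtm x y"
        then show "Rtm (fill (CActive l T t Hole v) x) (fill (CActive l T' t' Hole v') y)"
          using R_Active(1,3,7,9) by (simp add: Rty_Rtm.R_Active)
      qed (use rs_active vv in simp_all)
      then show ?thesis using rs_active by simp
    qed
  qed
qed simp_all

end


context simctx begin

lemma fwd:
  assumes "S a b" "step \<delta> a a'"
  shows "\<exists>b'. steps \<delta> b b' \<and> S a' b'"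
  using assms(1)[unfolded S_def]
proof
  assume R: "Rtm a b"
  from assms(2)[unfolded step_iff] show ?thesis
  proof
    assume "rs \<delta> a a'"
    then show ?thesis using F1(2)[OF R] by simp
  next
    assume "\<exists>l. bf a l \<and> a \<noteq> Blame l \<and> a' = Blame l"
    then obtain l where l: "bf a l" "a' = Blame l" by metis
    have "bf b l" using F2(2)[OF R] l(1) by simp
    then have "steps \<delta> b (Blame l)" by (rule bf_steps)
    then show ?thesis using l(2) S_refl[of "Blame l"] by (intro exI[of _ "Blame l"]) simp
  qed
next
  assume "\<exists>l. steps \<delta> a (Blame l) \<and> steps \<delta> b (Blame l)"
  then obtain l where l: "steps \<delta> a (Blame l)" "steps \<delta> b (Blame l)" by metis
  have "steps \<delta> a' (Blame l)" using det_steps_Blame[OF assms(2) l(1)] .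
  then have "S a' b" unfolding S_def using l(2) by (intro disjI2 exI[of _ l]) simp
  then show ?thesis by (intro exI[of _ b]) simp
qed

lemma bwd:
  assumes "S a b" "step \<delta> b b'"
  shows "\<exists>a'. steps \<delta> a a' \<and> S a' b'"
  using assms(1)[unfolded S_def]
proof
  assume R: "Rtm a b"
  from assms(2)[unfolded step_iff] show ?thesis
  proof
    assume "rs \<delta> b b'"
    then show ?thesis using B1(2)[OF R] by simp
  next
    assume "\<exists>l. bf b l \<and> b \<noteq> Blame l \<and> b' = Blame l"
    then obtain l where l: "bf b l" "b' = Blame l" by metis
    have "steps \<delta> a (Blame l)" using B2(2)[OF R] l(1) by simp
    then show ?thesis using l(2) S_refl[of "Blame l"] by (intro exI[of _ "Blame l"]) simp
  qed
next
  assume "\<exists>l. steps \<delta> a (Blame l) \<and> steps \<delta> b (Blame l)"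
  then obtain l where l: "steps \<delta> a (Blame l)" "steps \<delta> b (Blame l)" by metis
  have "steps \<delta> b' (Blame l)" using det_steps_Blame[OF assms(2) l(2)] .
  then have "S a b'" unfolding S_def using l(1) by (intro disjI2 exI[of _ l]) simp
  then show ?thesis by (intro exI[of _ a]) simp
qed

lemma S_val_l:
  assumes "S v b" "is_val v"
  shows "is_val b \<and> (v = Const (CBool True) \<longrightarrow> b = Const (CBool True))"
  using assms(1)[unfolded S_def]
proof
  assume "Rtm v b"
  then show ?thesis using Rtm_val_l assms(2) Rtm_Const_l by blast
next
  assume "\<exists>l. steps \<delta> v (Blame l) \<and> steps \<delta> b (Blame l)"
  then obtain l where "steps \<delta> v (Blame l)" by metis
  then have "Blame l = v" using steps_val assms(2) by metis
  then show ?thesis using assms(2) by auto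
qed

lemma part1:
  assumes "steps \<delta> a v1" "is_val v1" "S a b"
  shows "\<exists>v2. steps \<delta> b v2 \<and> is_val v2 \<and> (v1 = Const (CBool True) \<longrightarrow> v2 = Const (CBool True))"
  using assms(1,3)
proof (induct arbitrary: b rule: converse_rtranclp_induct)
  case base
  then show ?case using S_val_l[OF base assms(2)] by (intro exI[of _ b]) simp
next
  case (step y z)
  obtain b' where b': "steps \<delta> b b'" "S z b'" using fwd[OF step(4) step(1)] by metis
  obtain v2 where v2: "steps \<delta> b' v2" "is_val v2" "v1 = Const (CBool True) \<longrightarrow> v2 = Const (CBool True)"
    using step(3)[OF b'(2)] by metis
  have "steps \<delta> b v2" using b'(1) v2(1) by (rule rtranclp_trans)
  then show ?case using v2(2,3) by (intro exI[of _ v2]) simp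
qed

lemma S_val_r:
  assumes "S a v" "is_val v"
  shows "\<exists>v1. steps \<delta> a v1 \<and> is_val v1 \<and> (v = Const (CBool True) \<longrightarrow> v1 = Const (CBool True))"
  using assms(1)[unfolded S_def]
proof
  assume R: "Rtm a v"
  from Rtm_val_r[OF R assms(2)] show ?thesis
  proof
    assume va: "is_val a"
    have "v = Const (CBool True) \<longrightarrow> a = Const (CBool True)" using Rtm_Const_r R va e1_nv by metis
    then show ?thesis using va by (intro exI[of _ a]) simp
  next
    assume h: "a = e1 \<and> v = e2"
    have "steps \<delta> a v" using st h by (simp add: r_into_rtranclp)
    then show ?thesis using assms(2) by (intro exI[of _ v]) simp
  qed
next
  assume "\<exists>l. steps \<delta> a (Blame l) \<and> steps \<delta> v (Blame l)"
  then obtain l where "steps \<delta> v (Blame l)" by metis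
  then have "Blame l = v" using steps_val assms(2) by metis
  then show ?thesis using assms(2) by auto
qed

lemma part2:
  assumes "steps \<delta> b v2" "is_val v2" "S a b"
  shows "\<exists>v1. steps \<delta> a v1 \<and> is_val v1 \<and> (v2 = Const (CBool True) \<longrightarrow> v1 = Const (CBool True))"
  using assms(1,3)
proof (induct arbitrary: a rule: converse_rtranclp_induct)
  case base
  then show ?case using S_val_r[OF base assms(2)] by simp
next
  case (step y z)
  obtain a' where a': "steps \<delta> a a'" "S a' z" using bwd[OF step(4) step(1)] by metis
  obtain v1 where v1: "steps \<delta> a' v1" "is_val v1" "v2 = Const (CBool True) \<longrightarrow> v1 = Const (CBool True)"
    using step(3)[OF a'(2)] by metis
  have "steps \<delta> a v1" using a'(1) v1(1) by (rule rtranclp_trans)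
  then show ?case using v1(2,3) by (intro exI[of _ v1]) simp
qed

end

theorem mainTheorem5:
  fixes \<delta> :: "'p \<Rightarrow> 'k const list \<Rightarrow> 'k const option"
    and e e1 e2 :: "('b,'k,'p,'l) tm" and x :: nat
  assumes "is_term e" and "is_term e1" and "is_term e2"
    and "step \<delta> e1 e2"
  shows "(\<forall>v1. steps \<delta> (subst_tm x e1 e) v1 \<and> is_val v1 \<longrightarrow>
            (\<exists>v2. steps \<delta> (subst_tm x e2 e) v2 \<and> is_val v2 \<and>
                  (v1 = Const (CBool True) \<longrightarrow> v2 = Const (CBool True))))
       \<and> (\<forall>v2. steps \<delta> (subst_tm x e2 e) v2 \<and> is_val v2 \<longrightarrow>
            (\<exists>v1. steps \<delta> (subst_tm x e1 e) v1 \<and> is_val v1 \<and>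
                  (v2 = Const (CBool True) \<longrightarrow> v1 = Const (CBool True))))"
proof -
  interpret simctx \<delta> e1 e2
    using assms(2-4) by unfold_locales (simp_all add: is_term_def)
  have gr: "gr_tm e" using assms(1) by (simp add: is_term_def)
  have SS: "S (subst_tm x e1 e) (subst_tm x e2 e)"
    unfolding S_def using R_subst(2)[OF gr] by (rule disjI1)
  show ?thesis
  proof (intro conjI allI impI)
    fix v1 assume h: "steps \<delta> (subst_tm x e1 e) v1 \<and> is_val v1"
    show "\<exists>v2. steps \<delta> (subst_tm x e2 e) v2 \<and> is_val v2 \<and> (v1 = Const (CBool True) \<longrightarrow> v2 = Const (CBool True))"
      using part1[OF conjunct1[OF h] conjunct2[OF h] SS] .
  next
    fix v2 assume h: "steps \<delta> (subst_tm x e2 e) v2 \<and> is_val v2"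
    show "\<exists>v1. steps \<delta> (subst_tm x e1 e) v1 \<and> is_val v1 \<and> (v2 = Const (CBool True) \<longrightarrow> v1 = Const (CBool True))"
      using part2[OF conjunct1[OF h] conjunct2[OF h] SS] .
  qed
qed


end
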